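(* Let $\mathcal{I}$ be a meager ideal on $\mathbf{N}$ and let $\mathscr{A}$ be a countable family of regular matrices $A=(a_{n,i})$ each satisfying $\lim_n\sum_i|a_{n,i}|=1$. Then the set $$\{x\in(0,1]: \Gamma_b^k(x,\mathcal{I},A)=\Delta_b^k \text{ for all integers } b\ge2,\ k\ge1, \text{ and all } A\in\mathscr{A}\}$$ is comeager in $(0,1]$.
   Context: For an integer $b\ge 2$ and $x\in(0,1]$, write $x=\sum_{n\ge 1} d_{b,n}(x)/b^n$ for the unique nonterminating $b$-adic expansion, with digits $d_{b,n}(x)\in\{0,\dots,b-1\}$. Let $S_b^k$ be the set of strings $\bm{s}=s_1\cdots s_k$ of length $k$ over $\{0,\dots,b-1\}$. For $\bm{s}\in S_b^k$ and $n\ge1$ put $\pi_{b,\bm{s},n}(x)=\frac{1}{n}\#\{i\in\{1,\dots,n\}: d_{b,i+j-1}(x)=s_j \text{ for all } j=1,\dots,k\}$, and $\bm{\pi}^k_{b,n}(x)=(\pi_{b,\bm{s},n}(x):\bm{s}\in S_b^k)\in\mathbf{R}^{b^k}$. Let $\Delta_b^k=\{(p_{\bm{s}})_{\bm{s}\in S_b^k}\in\mathbf{R}^{b^k}: \sum_{\bm{s}}p_{\bm{s}}=1,\ p_{\bm{s}}\ge0,\ \sum_{s_0}p_{s_0\bm{s}}=\sum_{s_k}p_{\bm{s}s_k} \text{ for all } \bm{s}\in S_b^{k-1}\}$ (concatenated strings). An ideal on $\mathbf{N}$ is a family $\mathcal{I}\subseteq\mathcal{P}(\mathbf{N})$ closed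 under finite unions and subsets, containing all finite sets, and $\ne\mathcal{P}(\mathbf{N})$; it is meager if it is a meager subset of $\mathcal{P}(\mathbf{N})$ with the Cantor-space topology. A regular matrix is an infinite real matrix $A=(a_{n,i})_{n,i\in\mathbf{N}}$ such that for every $d$ and every $\mathbf{R}^d$-valued sequence $\bm{z}=(\bm{z}_i)$ converging to $\bm{\eta}$, the series $A_n\bm{z}:=\sum_i a_{n,i}\bm{z}_i$ exists for all $n$ and $\lim_n A_n\bm{z}=\bm{\eta}$. For a sequence $(x_n)$ in $\mathbf{R}^d$, $\eta$ is an $\mathcal{I}$-cluster point if $\{n: x_n\in U\}\notin\mathcal{I}$ for every open neighborhood $U$ of $\eta$. With $\bm{\pi}^k_b(x)=(\bm{\pi}^k_{b,n}(x):n\ge1)$, $\Gamma_b^k(x,\mathcal{I},A)$ denotes the set of $\mathcal{I}$-cluster points of $(A_n\bm{\pi}^k_b(x):n\ge1)$. *)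

theory Defs
  imports "HOL-Analysis.Analysis"
begin

definition nowhere_dense_in :: "'a topology \<Rightarrow> 'a set \<Rightarrow> bool" where
  "nowhere_dense_in X S \<longleftrightarrow> S \<subseteq> topspace X \<and> X interior_of (X closure_of S) = {}"

definition meager_in :: "'a topology \<Rightarrow> 'a set \<Rightarrow> bool" where
  "meager_in X S \<longleftrightarrow> S \<subseteq> topspace X \<and>
     (\<exists>F. countable F \<and> (\<forall>T\<in>F. nowhere_dense_in X T) \<and> S \<subseteq> \<Union>F)"

definition comeager_in :: "'a topology \<Rightarrow> 'a set \<Rightarrow> bool" where
  "comeager_in X S \<longleftrightarrow> S \<subseteq> topspace X \<and> meager_in X (topspace X - S)"

definition is_ideal :: "nat set set \<Rightarrow> bool" where
  "is_ideal I \<longleftrightarrow>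
     (\<forall>A\<in>I. \<forall>B\<in>I. A \<union> B \<in> I) \<and>
     (\<forall>A\<in>I. \<forall>B. B \<subseteq> A \<longrightarrow> B \<in> I) \<and>
     (\<forall>F. finite F \<longrightarrow> F \<in> I) \<and>
     I \<noteq> UNIV"

text \<open>Cantor space: P(N) identified with nat => bool via characteristic functions,
  with the product of discrete two-point spaces.\<close>
definition cantor_space :: "(nat \<Rightarrow> bool) topology" where
  "cantor_space = product_topology (\<lambda>_. discrete_topology (UNIV :: bool set)) UNIV"

definition meager_ideal :: "nat set set \<Rightarrow> bool" where
  "meager_ideal I \<longleftrightarrow> is_ideal I \<and> meager_in cantor_space ((\<lambda>A n. n \<in> A) ` I)"

text \<open>R^d-valued sequences are encoded as z :: nat => nat => real with z i j the j-th
  coordinate (j < d) of the i-th term; convergence in R^d is coordinatewise.\<close>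
definition regular_matrix :: "(nat \<Rightarrow> nat \<Rightarrow> real) \<Rightarrow> bool" where
  "regular_matrix a \<longleftrightarrow>
     (\<forall>(d::nat) (z::nat \<Rightarrow> nat \<Rightarrow> real) (\<eta>::nat \<Rightarrow> real).
        (\<forall>j<d. (\<lambda>i. z i j) \<longlonglongrightarrow> \<eta> j) \<longrightarrow>
        (\<forall>n. \<forall>j<d. summable (\<lambda>i. a n i * z i j)) \<and>
        (\<forall>j<d. (\<lambda>n. \<Sum>i. a n i * z i j) \<longlonglongrightarrow> \<eta> j))"

definition digit_seq :: "nat \<Rightarrow> real \<Rightarrow> nat \<Rightarrow> nat" where
  "digit_seq b x = (THE e. (\<forall>n. e n < b) \<and>
      (\<lambda>n. real (e n) / real b ^ Suc n) sums x \<and> (\<forall>m. \<exists>n\<ge>m. e n \<noteq> 0))"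

definition digit :: "nat \<Rightarrow> nat \<Rightarrow> real \<Rightarrow> nat" where
  "digit b n x = digit_seq b x (n - 1)"

definition strings :: "nat \<Rightarrow> nat \<Rightarrow> nat list set" where
  "strings b k = {s. length s = k \<and> (\<forall>c\<in>set s. c < b)}"

text \<open>pi_{b,s,n}(x); s ! j is s_{j+1}.\<close>
definition freq :: "nat \<Rightarrow> nat list \<Rightarrow> nat \<Rightarrow> real \<Rightarrow> real" where
  "freq b s n x = real (card {i\<in>{1..n}. \<forall>j<length s. digit b (i + j) x = s ! j}) / real n"

text \<open>Vectors in R^{b^k} are represented as functions nat list => real vanishing
  outside S_b^k (product topology on nat list => real).\<close>
definition freq_vec :: "nat \<Rightarrow> nat \<Rightarrow> nat \<Rightarrow> real \<Rightarrow> nat list \<Rightarrow> real" where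
  "freq_vec b k n x = (\<lambda>s. if s \<in> strings b k then freq b s n x else 0)"

text \<open>A_n pi^k_b(x): rows and columns of A indexed from 0, column i paired with
  pi^k_{b,i+1}(x).\<close>
definition mat_freq :: "(nat \<Rightarrow> nat \<Rightarrow> real) \<Rightarrow> nat \<Rightarrow> nat \<Rightarrow> real \<Rightarrow> nat \<Rightarrow> nat list \<Rightarrow> real" where
  "mat_freq a b k x n = (\<lambda>s. if s \<in> strings b k then (\<Sum>i. a n i * freq b s (Suc i) x) else 0)"

definition I_cluster :: "nat set set \<Rightarrow> (nat \<Rightarrow> 'a::topological_space) \<Rightarrow> 'a \<Rightarrow> bool" where
  "I_cluster I f \<eta> \<longleftrightarrow> (\<forall>U. open U \<longrightarrow> \<eta> \<in> U \<longrightarrow> {n. f n \<in> U} \<notin> I)"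

definition Gamma :: "nat \<Rightarrow> nat \<Rightarrow> real \<Rightarrow> nat set set \<Rightarrow> (nat \<Rightarrow> nat \<Rightarrow> real) \<Rightarrow> (nat list \<Rightarrow> real) set" where
  "Gamma b k x I a = {\<eta>. I_cluster I (mat_freq a b k x) \<eta>}"

definition Delta :: "nat \<Rightarrow> nat \<Rightarrow> (nat list \<Rightarrow> real) set" where
  "Delta b k = {p. (\<forall>s. s \<notin> strings b k \<longrightarrow> p s = 0) \<and>
      (\<Sum>s\<in>strings b k. p s) = 1 \<and> (\<forall>s\<in>strings b k. p s \<ge> 0) \<and>
      (\<forall>s\<in>strings b (k - 1). (\<Sum>c<b. p (c # s)) = (\<Sum>c<b. p (s @ [c])))}"

end

theory Submission
  imports Defs
begin


definition blk :: "(nat \<Rightarrow> nat) \<Rightarrow> nat \<Rightarrow> nat \<Rightarrow> nat list" where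
  "blk f k p = map (\<lambda>j. f (p + j)) [0..<k]"

definition cnt :: "(nat \<Rightarrow> nat) \<Rightarrow> nat \<Rightarrow> nat list \<Rightarrow> nat \<Rightarrow> nat \<Rightarrow> nat" where
  "cnt f k s a n = card {p\<in>{a..<a+n}. blk f k p = s}"

lemma length_blk[simp]: "length (blk f k p) = k"
  by (simp add: blk_def)

lemma nth_blk[simp]: "j < k \<Longrightarrow> blk f k p ! j = f (p + j)"
  by (simp add: blk_def)

lemma cnt_le: "cnt f k s a n \<le> n"
proof -
  have "cnt f k s a n \<le> card {a..<a+n}" unfolding cnt_def by (rule card_mono) auto
  then show ?thesis by simp
qed

lemma cnt_add: "cnt f k s a (n + m) = cnt f k s a n + cnt f k s (a + n) m"
proof -
  have "{p\<in>{a..<a+(n+m)}. blk f k p = s} = {p\<in>{a..<a+n}. blk f k p = s} \<union> {p\<in>{a+n..<a+n+m}. blk f k p = s}"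
    by auto
  moreover have "card ({p\<in>{a..<a+n}. blk f k p = s} \<union> {p\<in>{a+n..<a+n+m}. blk f k p = s})
     = card {p\<in>{a..<a+n}. blk f k p = s} + card {p\<in>{a+n..<a+n+m}. blk f k p = s}"
    by (rule card_Un_disjoint) auto
  ultimately show ?thesis unfolding cnt_def by simp
qed

lemma blk_shift: "blk (\<lambda>q. f (q + t)) k p = blk f k (p + t)"
  by (simp add: blk_def algebra_simps)

lemma blk_Suc_shift: "blk (\<lambda>q. f (Suc q)) k p = blk f k (Suc p)"
  by (simp add: blk_def)

lemma cnt_shift: "cnt f k s (a + t) n = cnt (\<lambda>q. f (q + t)) k s a n"
proof -
  have "{p\<in>{a+t..<a+t+n}. blk f k p = s} = (\<lambda>p. p + t) ` {p\<in>{a..<a+n}. blk (\<lambda>q. f (q + t)) k p = s}"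
  proof (rule set_eqI, rule iffI)
    fix p assume "p \<in> {p\<in>{a+t..<a+t+n}. blk f k p = s}"
    then show "p \<in> (\<lambda>p. p + t) ` {p\<in>{a..<a+n}. blk (\<lambda>q. f (q + t)) k p = s}"
      by (intro image_eqI[of _ _ "p - t"]) (auto simp: blk_shift)
  qed (auto simp: blk_shift)
  moreover have "inj (\<lambda>p::nat. p + t)" by (auto intro: injI)
  ultimately show ?thesis unfolding cnt_def
    by (simp add: card_image inj_on_def)
qed

lemma cnt_cong:
  assumes "\<And>q. a \<le> q \<Longrightarrow> q < a + n + k \<Longrightarrow> f q = g q"
  shows "cnt f k s a n = cnt g k s a n"
proof -
  have "blk f k p = blk g k p" if "p \<in> {a..<a+n}" for p
    using that assms by (auto simp: blk_def)
  then have "{p\<in>{a..<a+n}. blk f k p = s} = {p\<in>{a..<a+n}. blk g k p = s}" by auto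
  then show ?thesis unfolding cnt_def by simp
qed

lemma cnt_agree:
  assumes "\<And>q. a \<le> q \<Longrightarrow> q < a + n \<Longrightarrow> f q = g q"
  shows "\<bar>real (cnt f k s a n) - real (cnt g k s a n)\<bar> \<le> real k"
proof (cases "n \<le> k")
  case True
  then show ?thesis using cnt_le[of f k s a n] cnt_le[of g k s a n] by linarith
next
  case False
  then obtain n' where n': "n = n' + k" by (metis le_add_diff_inverse2 nat_le_linear)
  have e: "cnt f k s a n' = cnt g k s a n'"
    by (rule cnt_cong) (use assms n' in auto)
  have "cnt f k s a n = cnt f k s a n' + cnt f k s (a + n') k"
       "cnt g k s a n = cnt g k s a n' + cnt g k s (a + n') k"
    using n' cnt_add by auto
  then show ?thesis using e cnt_le[of f k s "a+n'" k] cnt_le[of g k s "a+n'" k] by linarith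
qed

lemma finite_strings: "finite (strings b k)"
proof -
  have "strings b k \<subseteq> {xs. set xs \<subseteq> {..<b} \<and> length xs = k}"
    by (auto simp: strings_def)
  moreover have "finite {xs. set xs \<subseteq> {..<b} \<and> length xs = k}"
    by (rule finite_lists_length_eq) simp
  ultimately show ?thesis by (rule finite_subset)
qed

lemma blk_strings: "(\<And>q. f q < b) \<Longrightarrow> blk f k p \<in> strings b k"
  by (auto simp: strings_def blk_def)

lemma sum_cnt_strings:
  assumes "\<And>q. f q < b"
  shows "(\<Sum>s\<in>strings b k. cnt f k s a n) = n"
proof -
  have "blk f k ` {a..<a+n} \<subseteq> strings b k" using blk_strings assms by blast
  then have "(\<Sum>s\<in>strings b k. card {p\<in>{a..<a+n}. blk f k p = s}) = card {a..<a+n}"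
    using sum.group[of "{a..<a+n}" "strings b k" "\<lambda>p. blk f k p" "\<lambda>_. (1::nat)"]
      finite_strings by simp
  then show ?thesis unfolding cnt_def by simp
qed

lemma blk_Suc_Cons: "blk f (Suc k) p = f p # blk f k (Suc p)"
  unfolding blk_def by (simp add: upt_conv_Cons map_Suc_upt[symmetric] del: upt_Suc) 

lemma blk_Suc_snoc: "blk f (Suc k) p = blk f k p @ [f (p + k)]"
  unfolding blk_def by simp

lemma card_fib:
  fixes g :: "'a \<Rightarrow> nat"
  assumes "finite S" "\<And>p. p \<in> S \<Longrightarrow> g p < b"
  shows "(\<Sum>c<b. card {p\<in>S. g p = c}) = card S"
proof -
  have "g ` S \<subseteq> {..<b}" using assms(2) by auto
  then show ?thesis using sum.group[of S "{..<b}" g "\<lambda>_. (1::nat)"] assms(1) finite_lessThan[of b] by simp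
qed

lemma fib1:
  assumes "\<And>q. f q < b"
  shows "(\<Sum>c<b. cnt f (Suc k) (c # v) a n) = cnt f k v (Suc a) n"
proof -
  let ?S = "{p\<in>{a..<a+n}. blk f k (Suc p) = v}"
  have "cnt f (Suc k) (c # v) a n = card {p\<in>?S. f p = c}" for c
    unfolding cnt_def blk_Suc_Cons by (rule arg_cong[where f=card]) auto
  then have "(\<Sum>c<b. cnt f (Suc k) (c # v) a n) = card ?S"
    using card_fib[of ?S f b] assms by simp
  also have "\<dots> = cnt (\<lambda>q. f (q + 1)) k v a n"
    unfolding cnt_def by (simp add: blk_Suc_shift)
  also have "\<dots> = cnt f k v (Suc a) n" using cnt_shift[of f k v a 1 n] by simp
  finally show ?thesis .
qed

lemma fib2:
  assumes "\<And>q. f q < b"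
  shows "(\<Sum>c<b. cnt f (Suc k) (v @ [c]) a n) = cnt f k v a n"
proof -
  let ?S = "{p\<in>{a..<a+n}. blk f k p = v}"
  have "cnt f (Suc k) (v @ [c]) a n = card {p\<in>?S. f (p + k) = c}" for c
  proof -
    have "blk f (Suc k) p = v @ [c] \<longleftrightarrow> blk f k p = v \<and> f (p + k) = c" for p
      unfolding blk_Suc_snoc by auto
    then show ?thesis unfolding cnt_def by (intro arg_cong[where f=card]) blast
  qed
  then show ?thesis
    using card_fib[of ?S "\<lambda>p. f (p + k)" b] assms unfolding cnt_def by simp
qed

lemma cnt_Suc_diff: "\<bar>real (cnt f k v (Suc a) n) - real (cnt f k v a n)\<bar> \<le> 1"
proof -
  have "cnt f k v a (1 + n) = cnt f k v a 1 + cnt f k v (Suc a) n"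
    using cnt_add[of f k v a 1 n] by simp
  moreover have "cnt f k v a (n + 1) = cnt f k v a n + cnt f k v (a + n) 1"
    using cnt_add[of f k v a n 1] by simp
  ultimately have "cnt f k v a 1 + cnt f k v (Suc a) n = cnt f k v a n + cnt f k v (a + n) 1"
    by (simp add: add.commute)
  then show ?thesis using cnt_le[of f k v a 1] cnt_le[of f k v "a+n" 1] by linarith
qed

lemma cnt_periodic_mult:
  assumes "\<And>q. f (q + L) = f q"
  shows "cnt f k s 0 (m * L) = m * cnt f k s 0 L"
proof (induction m)
  case 0 then show ?case by (simp add: cnt_def)
next
  case (Suc m)
  have fe: "(\<lambda>q. f (q + m * L)) = f"
  proof
    fix q show "f (q + m * L) = f q"
    proof (induction m)
      case (Suc m)
      have "f (q + Suc m * L) = f ((q + m * L) + L)" by (simp add: algebra_simps)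
      then show ?case using assms Suc by simp
    qed simp
  qed
  have "cnt f k s 0 (Suc m * L) = cnt f k s 0 (m * L + L)" by (simp add: add.commute)
  also have "\<dots> = cnt f k s 0 (m * L) + cnt f k s (0 + m * L) L" by (rule cnt_add)
  also have "cnt f k s (0 + m * L) L = cnt f k s 0 L" using cnt_shift[of f k s 0 "m*L" L] fe by simp
  finally show ?case using Suc by simp
qed

lemma cnt_periodic_shift1:
  assumes "\<And>q. f (q + L) = f q"
  shows "cnt f k s 1 L = cnt f k s 0 L"
proof -
  have "cnt f k s 0 (1 + L) = cnt f k s 0 1 + cnt f k s 1 L" using cnt_add[of f k s 0 1 L] by simp
  moreover have "cnt f k s 0 (L + 1) = cnt f k s 0 L + cnt f k s L 1" using cnt_add[of f k s 0 L 1] by simp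
  moreover have "cnt f k s L 1 = cnt f k s 0 1"
  proof -
    have "(\<lambda>q. f (q + L)) = f" using assms by auto
    then show ?thesis using cnt_shift[of f k s 0 L 1] by simp
  qed
  ultimately show ?thesis by (simp add: add.commute)
qed

definition per :: "nat list \<Rightarrow> nat \<Rightarrow> nat" where
  "per u q = u ! (q mod length u)"

lemma per_periodic: "per u (q + length u) = per u q"
  by (simp add: per_def)

lemma per_less: "u \<noteq> [] \<Longrightarrow> (\<forall>x\<in>set u. x < b) \<Longrightarrow> per u q < b"
  unfolding per_def by (metis length_greater_0_conv mod_less_divisor nth_mem)

definition ccl :: "nat \<Rightarrow> nat list \<Rightarrow> nat list \<Rightarrow> nat" where
  "ccl k u s = cnt (per u) k s 0 (length u)"


lemma walk_word:
  assumes E: "E \<subseteq> strings b (Suc k)" "E \<noteq> {}"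
    and nx: "\<And>e. e \<in> E \<Longrightarrow> \<exists>e'\<in>E. butlast e' = tl e"
  shows "\<exists>c. c \<noteq> [] \<and> (\<forall>x\<in>set c. x < b) \<and> (\<forall>q. blk (per c) (Suc k) q \<in> E)"
proof -
  obtain e0 where e0: "e0 \<in> E" using E by auto
  define nxt where "nxt e = (SOME e'. e' \<in> E \<and> butlast e' = tl e)" for e
  have nxt: "nxt e \<in> E \<and> butlast (nxt e) = tl e" if "e \<in> E" for e
  proof -
    have "\<exists>e'. e' \<in> E \<and> butlast e' = tl e" using nx[OF that] by blast
    then show ?thesis unfolding nxt_def by (rule someI_ex)
  qed
  define w where "w n = (nxt ^^ n) e0" for n
  have wE: "w n \<in> E" for n
    by (induction n) (auto simp: w_def e0 nxt)
  have wS: "butlast (w (Suc n)) = tl (w n)" for n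
    using nxt[OF wE[of n]] by (simp add: w_def)
  have wl: "length (w n) = Suc k" for n using wE[of n] E(1) by (auto simp: strings_def)
  define g where "g n = hd (w n)" for n
  have wg: "w n ! j = g (n + j)" if "j < Suc k" for n j
    using that
  proof (induction j arbitrary: n)
    case 0
    have "w n \<noteq> []" using wl[of n] by auto
    then show ?case by (simp add: g_def hd_conv_nth)
  next
    case (Suc j)
    have "w n ! Suc j = tl (w n) ! j" using wl[of n] Suc.prems by (simp add: nth_tl)
    also have "\<dots> = butlast (w (Suc n)) ! j" using wS by simp
    also have "\<dots> = w (Suc n) ! j" using wl[of "Suc n"] Suc.prems by (simp add: nth_butlast)
    also have "\<dots> = g (Suc n + j)" using Suc by simp
    finally show ?case by simp
  qed
  have blkg: "blk g (Suc k) n = w n" for n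
    by (rule nth_equalityI) (auto simp: wl wg)
  have finE: "finite E" using E(1) finite_strings finite_subset by blast
  have "\<not> inj_on w {0..card E}"
  proof
    assume "inj_on w {0..card E}"
    then have "card (w ` {0..card E}) = Suc (card E)" by (simp add: card_image)
    moreover have "card (w ` {0..card E}) \<le> card E" using wE finE by (intro card_mono) auto
    ultimately show False by simp
  qed
  then obtain i j where ij: "i < j" "w i = w j"
    unfolding inj_on_def by (metis linorder_neqE_nat)
  define L where "L = j - i"
  have L0: "0 < L" using ij by (simp add: L_def)
  define c where "c = map (\<lambda>m. g (i + m)) [0..<L]"
  have lc: "length c = L" by (simp add: c_def)
  have perc: "per c q = g (i + q mod L)" for q
    using L0 by (simp add: per_def c_def lc)
  have B: "g (i + x) = g (i + x mod L)" if "x < L + Suc k" for x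
    using that
  proof (induction x rule: less_induct)
    case (less x)
    show ?case
    proof (cases "x < L")
      case True then show ?thesis by simp
    next
      case False
      then have xl: "x - L < Suc k" "x - L < x" using less.prems L0 by auto
      have "g (i + x) = g (j + (x - L))" using False ij by (simp add: L_def add.commute)
      also have "\<dots> = w j ! (x - L)" using wg[OF xl(1)] by simp
      also have "\<dots> = w i ! (x - L)" using ij by simp
      also have "\<dots> = g (i + (x - L))" using wg[OF xl(1)] by simp
      also have "\<dots> = g (i + (x - L) mod L)" using less.IH[OF xl(2)] less.prems by simp
      also have "(x - L) mod L = x mod L" using False by (simp add: le_mod_geq)
      finally show ?thesis .
    qed
  qed
  have "blk (per c) (Suc k) q = w (i + q mod L)" for q
  proof -
    have "blk (per c) (Suc k) q = blk g (Suc k) (i + q mod L)"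
    proof (rule nth_equalityI)
      fix t assume "t < length (blk (per c) (Suc k) q)"
      then have t: "t < Suc k" by simp
      have "per c (q + t) = g (i + (q mod L + t) mod L)" by (simp add: perc mod_add_left_eq)
      also have "\<dots> = g (i + (q mod L + t))"
      proof -
        have "q mod L < L" using L0 by simp
        then have "q mod L + t < L + Suc k" using t by linarith
        then show ?thesis using B[of "q mod L + t"] by simp
      qed
      finally show "blk (per c) (Suc k) q ! t = blk g (Suc k) (i + q mod L) ! t"
        using t by (simp add: add.assoc)
    qed simp
    then show ?thesis using blkg by simp
  qed
  then have "\<forall>q. blk (per c) (Suc k) q \<in> E" using wE by simp
  moreover have "c \<noteq> []" using lc L0 by auto
  moreover have "\<forall>x\<in>set c. x < b"
  proof
    fix x assume "x \<in> set c"
    then obtain m where "x = g (i + m)" by (auto simp: c_def)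
    then have "x = w (i + m) ! 0" using wg[of 0 "i+m"] by simp
    moreover have "w (i + m) \<in> strings b (Suc k)" using wE E(1) by blast
    ultimately show "x < b" using wl[of "i+m"] by (auto simp: strings_def)
  qed
  ultimately show ?thesis by blast
qed

lemma ccl_circ:
  assumes "c \<noteq> []" "\<forall>x\<in>set c. x < b"
  shows "(\<Sum>a<b. real (ccl (Suc k) c (a # v))) = (\<Sum>a<b. real (ccl (Suc k) c (v @ [a])))"
proof -
  have pb: "\<And>q. per c q < b" using per_less assms by blast
  have "(\<Sum>a<b. ccl (Suc k) c (a # v)) = cnt (per c) k v 1 (length c)"
    unfolding ccl_def using fib1[of "per c" b k v 0 "length c", OF pb] by simp
  also have "\<dots> = cnt (per c) k v 0 (length c)"
    by (rule cnt_periodic_shift1) (rule per_periodic)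
  also have "\<dots> = (\<Sum>a<b. ccl (Suc k) c (v @ [a]))"
    unfolding ccl_def using fib2[of "per c" b k v 0 "length c", OF pb] by simp
  finally show ?thesis by (metis of_nat_sum)
qed

lemma sum_ccl:
  assumes "c \<noteq> []" "\<forall>x\<in>set c. x < b"
  shows "(\<Sum>s\<in>strings b k. ccl k c s) = length c"
  unfolding ccl_def using sum_cnt_strings per_less[OF assms] by blast

lemma ccl_le: "ccl k c s \<le> length c"
  unfolding ccl_def by (rule cnt_le)

lemma ccl_pos_in:
  assumes "0 < ccl k c s"
  shows "\<exists>q. blk (per c) k q = s"
proof -
  have "{p\<in>{0..<0 + length c}. blk (per c) k p = s} \<noteq> {}"
    using assms unfolding ccl_def cnt_def by (metis card.empty less_irrefl)
  then show ?thesis by auto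
qed

lemma decomp:
  assumes nn: "\<forall>s\<in>strings b (Suc k). p s \<ge> 0"
    and circ: "\<forall>v\<in>strings b k. (\<Sum>a<b. p (a # v)) = (\<Sum>a<b. p (v @ [a]))"
  shows "\<exists>D. (\<forall>(c,l)\<in>set D. c \<noteq> [] \<and> (\<forall>x\<in>set c. x < b) \<and> l \<ge> 0) \<and>
      (\<forall>s\<in>strings b (Suc k). p s = (\<Sum>(c,l)\<leftarrow>D. l * real (ccl (Suc k) c s)))"
  using nn circ
proof (induction "card {s\<in>strings b (Suc k). p s > 0}" arbitrary: p rule: less_induct)
  case less
  define E where "E = {s\<in>strings b (Suc k). p s > 0}"
  have finE: "finite E" unfolding E_def using finite_strings by auto
  show ?case
  proof (cases "E = {}")
    case True
    then have "\<forall>s\<in>strings b (Suc k). p s = 0" using less.prems(1) unfolding E_def by force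
    then show ?thesis by (intro exI[of _ "[]"]) simp
  next
    case False
    have nx: "\<exists>e'\<in>E. butlast e' = tl e" if "e \<in> E" for e
    proof -
      have es: "e \<in> strings b (Suc k)" "p e > 0" using that by (auto simp: E_def)
      define v where "v = tl e"
      have lv: "v \<in> strings b k" using es(1) by (cases e) (auto simp: strings_def v_def)
      have ev: "e = hd e # v" "hd e < b" using es(1) by (cases e; auto simp: strings_def v_def)+
      have "p e \<le> (\<Sum>a<b. p (a # v))"
      proof -
        have "p (hd e # v) \<le> (\<Sum>a<b. p (a # v))"
          by (rule member_le_sum[of "hd e" "{..<b}" "\<lambda>a. p (a # v)"])
             (use ev less.prems(1) lv in \<open>auto simp: strings_def\<close>)
        then show ?thesis using ev by simp
      qed
      then have "0 < (\<Sum>a<b. p (v @ [a]))" using less.prems(2) lv es by auto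
      then obtain a where a: "a < b" "p (v @ [a]) > 0"
        by (metis (no_types, lifting) lessThan_iff not_less sum_nonpos)
      have "v @ [a] \<in> E" using a lv by (auto simp: E_def strings_def)
      moreover have "butlast (v @ [a]) = tl e" by (simp add: v_def)
      ultimately show ?thesis by blast
    qed
    obtain c where c: "c \<noteq> []" "\<forall>x\<in>set c. x < b" "\<forall>q. blk (per c) (Suc k) q \<in> E"
      using walk_word[of E b k] False nx unfolding E_def by auto
    define chi where "chi s = real (ccl (Suc k) c s)" for s
    define P where "P = {s\<in>strings b (Suc k). chi s > 0}"
    have finP: "finite P" unfolding P_def using finite_strings by auto
    have PE: "P \<subseteq> E"
    proof
      fix s assume "s \<in> P"
      then have "0 < ccl (Suc k) c s" by (simp add: P_def chi_def)
      then obtain q where "blk (per c) (Suc k) q = s" using ccl_pos_in by blast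
      then show "s \<in> E" using c(3) by blast
    qed
    have "P \<noteq> {}"
    proof
      assume "P = {}"
      then have "\<forall>s\<in>strings b (Suc k). chi s = 0" unfolding P_def chi_def by auto
      then have "(\<Sum>s\<in>strings b (Suc k). ccl (Suc k) c s) = 0" unfolding chi_def by simp
      then show False using sum_ccl[OF c(1,2)] c(1) by simp
    qed
    define lam where "lam = Min ((\<lambda>s. p s / chi s) ` P)"
    have "lam \<in> (\<lambda>s. p s / chi s) ` P"
      unfolding lam_def using finP \<open>P \<noteq> {}\<close> by (intro Min_in) auto
    then obtain s0 where s0: "s0 \<in> P" "lam = p s0 / chi s0" by blast
    have lamle: "lam \<le> p s / chi s" if "s \<in> P" for s
      unfolding lam_def using finP that by (intro Min_le) auto
    have s0E: "p s0 > 0" "chi s0 > 0" using s0 PE by (auto simp: E_def P_def)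
    have lam0: "lam \<ge> 0" using s0 s0E by simp
    define p' where "p' s = p s - lam * chi s" for s
    have chi0: "chi s \<ge> 0" for s by (simp add: chi_def)
    have nn': "\<forall>s\<in>strings b (Suc k). p' s \<ge> 0"
    proof
      fix s assume s: "s \<in> strings b (Suc k)"
      show "p' s \<ge> 0"
      proof (cases "chi s > 0")
        case True
        then have "lam \<le> p s / chi s" using lamle s by (simp add: P_def)
        then have "lam * chi s \<le> p s" using True by (simp add: pos_le_divide_eq)
        then show ?thesis by (simp add: p'_def)
      next
        case False
        then show ?thesis using chi0[of s] less.prems(1) s by (simp add: p'_def)
      qed
    qed
    have circ': "\<forall>v\<in>strings b k. (\<Sum>a<b. p' (a # v)) = (\<Sum>a<b. p' (v @ [a]))"
    proof
      fix v assume v: "v \<in> strings b k"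
      have "(\<Sum>a<b. p' (a # v)) = (\<Sum>a<b. p (a # v)) - lam * (\<Sum>a<b. chi (a # v))"
        by (simp add: p'_def sum_subtractf sum_distrib_left)
      also have "\<dots> = (\<Sum>a<b. p (v @ [a])) - lam * (\<Sum>a<b. chi (v @ [a]))"
        using less.prems(2) v ccl_circ[OF c(1,2), of k v] by (simp add: chi_def)
      also have "\<dots> = (\<Sum>a<b. p' (v @ [a]))"
        by (simp add: p'_def sum_subtractf sum_distrib_left)
      finally show "(\<Sum>a<b. p' (a # v)) = (\<Sum>a<b. p' (v @ [a]))" .
    qed
    have sub: "{s\<in>strings b (Suc k). p' s > 0} \<subseteq> E - {s0}"
    proof
      fix s assume s: "s \<in> {s\<in>strings b (Suc k). p' s > 0}"
      then have "p s > 0" using chi0[of s] lam0 by (simp add: p'_def) (smt (verit) mult_nonneg_nonneg)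
      moreover have "s \<noteq> s0"
      proof
        assume "s = s0"
        then have "p' s = 0" using s0 s0E by (simp add: p'_def)
        then show False using s by simp
      qed
      ultimately show "s \<in> E - {s0}" using s by (simp add: E_def)
    qed
    have "s0 \<in> E" using s0 PE by auto
    then have "card {s\<in>strings b (Suc k). p' s > 0} < card E"
    proof -
      have "card {s\<in>strings b (Suc k). p' s > 0} \<le> card (E - {s0})"
        using sub finE by (intro card_mono) auto
      also have "\<dots> < card E" using finE \<open>s0 \<in> E\<close> by (rule card_Diff1_less)
      finally show ?thesis .
    qed
    then obtain D where D: "\<forall>(c,l)\<in>set D. c \<noteq> [] \<and> (\<forall>x\<in>set c. x < b) \<and> l \<ge> 0"
       "\<forall>s\<in>strings b (Suc k). p' s = (\<Sum>(c,l)\<leftarrow>D. l * real (ccl (Suc k) c s))"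
      using less.hyps[of p'] nn' circ' unfolding E_def by blast
    show ?thesis
    proof (intro exI[of _ "(c, lam) # D"] conjI)
      show "\<forall>(c', l)\<in>set ((c, lam) # D). c' \<noteq> [] \<and> (\<forall>x\<in>set c'. x < b) \<and> 0 \<le> l"
        using D(1) c lam0 by auto
      show "\<forall>s\<in>strings b (Suc k). p s = (\<Sum>(c, l)\<leftarrow>(c, lam) # D. l * real (ccl (Suc k) c s))"
        using D(2) by (simp add: p'_def chi_def algebra_simps)
    qed
  qed
qed

lemma ccl_nil[simp]: "ccl k [] s = 0"
  by (simp add: ccl_def cnt_def)

lemma ccl_append:
  "\<bar>real (ccl k (u @ v) s) - real (ccl k u s) - real (ccl k v s)\<bar> \<le> 2 * real k"
proof -
  have "ccl k (u @ v) s = cnt (per (u @ v)) k s 0 (length u) + cnt (per (u @ v)) k s (0 + length u) (length v)"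
    unfolding ccl_def using cnt_add[of "per (u@v)" k s 0 "length u" "length v"] by simp
  moreover have "\<bar>real (cnt (per (u @ v)) k s 0 (length u)) - real (cnt (per u) k s 0 (length u))\<bar> \<le> real k"
    by (rule cnt_agree) (simp add: per_def nth_append)
  moreover have "cnt (per (u @ v)) k s (0 + length u) (length v) = cnt (\<lambda>q. per (u @ v) (q + length u)) k s 0 (length v)"
    by (rule cnt_shift)
  moreover have "\<bar>real (cnt (\<lambda>q. per (u @ v) (q + length u)) k s 0 (length v)) - real (cnt (per v) k s 0 (length v))\<bar> \<le> real k"
    by (rule cnt_agree) (simp add: per_def nth_append)
  ultimately show ?thesis unfolding ccl_def by linarith
qed

lemma concat_rep_nth:
  "i < m * length c \<Longrightarrow> concat (replicate m c) ! i = c ! (i mod length c)"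
proof (induction m arbitrary: i)
  case (Suc m)
  show ?case
  proof (cases "i < length c")
    case True then show ?thesis by (simp add: nth_append)
  next
    case False
    then have "concat (replicate (Suc m) c) ! i = concat (replicate m c) ! (i - length c)"
      by (simp add: nth_append)
    also have "\<dots> = c ! ((i - length c) mod length c)" using Suc False by simp
    also have "(i - length c) mod length c = i mod length c" using False by (simp add: le_mod_geq)
    finally show ?thesis .
  qed
qed simp

lemma ccl_rep: "ccl k (concat (replicate m c)) s = m * ccl k c s"
proof (cases "c = [] \<or> m = 0")
  case True then show ?thesis by auto
next
  case False
  then have m0: "m > 0" and c0: "length c > 0" by auto
  have len: "length (concat (replicate m c)) = m * length c" by (simp add: length_concat sum_list_replicate)
  have "per (concat (replicate m c)) = per c"
  proof
    fix q
    have "q mod (m * length c) < m * length c" using m0 c0 by simp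
    then have "per (concat (replicate m c)) q = c ! (q mod (m * length c) mod length c)"
      unfolding per_def len by (rule concat_rep_nth)
    also have "q mod (m * length c) mod length c = q mod length c" by (simp add: mod_mod_cancel)
    finally show "per (concat (replicate m c)) q = per c q" by (simp add: per_def)
  qed
  then show ?thesis unfolding ccl_def len
    using cnt_periodic_mult[of "per c" "length c" k s m] per_periodic by simp
qed

definition word :: "(nat list \<times> real) list \<Rightarrow> nat \<Rightarrow> nat list" where
  "word D M = concat (map (\<lambda>(c,l). concat (replicate (nat \<lfloor>real M * l\<rfloor>) c)) D)"

lemma word_Cons: "word ((c,l) # D) M = concat (replicate (nat \<lfloor>real M * l\<rfloor>) c) @ word D M"
  by (simp add: word_def)

lemma word_set: "(\<forall>(c,l)\<in>set D. \<forall>x\<in>set c. x < b) \<Longrightarrow> \<forall>x\<in>set (word D M). x < b"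
  by (induction D) (auto simp: word_def)

lemma floor_nat_bounds:
  assumes "x \<ge> 0"
  shows "real (nat \<lfloor>x\<rfloor>) \<le> x" "x - 1 < real (nat \<lfloor>x\<rfloor>)"
  using assms by linarith+

lemma word_est:
  assumes "\<forall>(c,l)\<in>set D. l \<ge> 0"
  shows "\<bar>real (ccl k (word D M) s) - real M * (\<Sum>(c,l)\<leftarrow>D. l * real (ccl k c s))\<bar>
            \<le> (\<Sum>(c,l)\<leftarrow>D. real (length c) + 2 * real k)
      \<and> \<bar>real (length (word D M)) - real M * (\<Sum>(c,l)\<leftarrow>D. l * real (length c))\<bar>
            \<le> (\<Sum>(c,l)\<leftarrow>D. real (length c))"
  using assms
proof (induction D)
  case Nil then show ?case by (simp add: word_def)
next
  case (Cons cl D)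
  obtain c l where cl: "cl = (c, l)" by force
  have l0: "l \<ge> 0" using Cons.prems cl by auto
  define m where "m = nat \<lfloor>real M * l\<rfloor>"
  have mb: "real m \<le> real M * l" "real M * l - 1 < real m"
    unfolding m_def using floor_nat_bounds[of "real M * l"] l0 by auto
  have IH: "\<bar>real (ccl k (word D M) s) - real M * (\<Sum>(c,l)\<leftarrow>D. l * real (ccl k c s))\<bar>
            \<le> (\<Sum>(c,l)\<leftarrow>D. real (length c) + 2 * real k)"
      "\<bar>real (length (word D M)) - real M * (\<Sum>(c,l)\<leftarrow>D. l * real (length c))\<bar>
            \<le> (\<Sum>(c,l)\<leftarrow>D. real (length c))"
    using Cons by auto
  have w: "word (cl # D) M = concat (replicate m c) @ word D M" by (simp add: cl word_Cons m_def)
  have A: "\<bar>real (ccl k (word (cl # D) M) s) - real m * real (ccl k c s) - real (ccl k (word D M) s)\<bar> \<le> 2 * real k"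
    using ccl_append[of k "concat (replicate m c)" "word D M" s] unfolding w ccl_rep by simp
  have cle: "real (ccl k c s) \<le> real (length c)" using ccl_le by simp
  have B: "\<bar>real m * real (ccl k c s) - real M * l * real (ccl k c s)\<bar> \<le> real (length c)"
  proof -
    have "\<bar>real m * real (ccl k c s) - real M * l * real (ccl k c s)\<bar> = \<bar>real m - real M * l\<bar> * real (ccl k c s)"
      by (simp add: abs_mult left_diff_distrib[symmetric])
    also have "\<dots> \<le> 1 * real (length c)" using mb cle by (intro mult_mono) auto
    finally show ?thesis by simp
  qed
  have C: "\<bar>real m * real (length c) - real M * l * real (length c)\<bar> \<le> real (length c)"
  proof -
    have "\<bar>real m * real (length c) - real M * l * real (length c)\<bar> = \<bar>real m - real M * l\<bar> * real (length c)"
      by (simp add: abs_mult left_diff_distrib[symmetric])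
    also have "\<dots> \<le> 1 * real (length c)" using mb by (intro mult_mono) auto
    finally show ?thesis by simp
  qed
  have len: "length (word (cl # D) M) = m * length c + length (word D M)"
    unfolding w by (simp add: length_concat sum_list_replicate)
  show ?case
  proof
    show "\<bar>real (ccl k (word (cl # D) M) s) - real M * (\<Sum>(c,l)\<leftarrow>cl # D. l * real (ccl k c s))\<bar>
            \<le> (\<Sum>(c,l)\<leftarrow>cl # D. real (length c) + 2 * real k)"
      using A B IH(1) by (simp add: cl algebra_simps)
    show "\<bar>real (length (word (cl # D) M)) - real M * (\<Sum>(c,l)\<leftarrow>cl # D. l * real (length c))\<bar>
            \<le> (\<Sum>(c,l)\<leftarrow>cl # D. real (length c))"
      using C IH(2) len by (simp add: cl algebra_simps)
  qed
qed

lemma sum_list_swap: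
  "(\<Sum>s\<in>S. \<Sum>(c,l)\<leftarrow>D. F c l s) = (\<Sum>(c,l)\<leftarrow>D. \<Sum>s\<in>S. F c l s :: real)"
  by (induction D) (auto simp: sum.distrib)

lemma approx_word:
  assumes D: "\<forall>(c,l)\<in>set D. c \<noteq> [] \<and> (\<forall>x\<in>set c. x < b) \<and> l \<ge> 0"
    and eta: "\<forall>s\<in>strings b k. eta s = (\<Sum>(c,l)\<leftarrow>D. l * real (ccl k c s))"
    and sum1: "(\<Sum>s\<in>strings b k. eta s) = 1"
    and eb: "\<forall>s\<in>strings b k. 0 \<le> eta s \<and> eta s \<le> 1"
    and d: "d > 0"
  shows "\<exists>u. u \<noteq> [] \<and> (\<forall>x\<in>set u. x < b) \<and>
          (\<forall>s\<in>strings b k. \<bar>real (ccl k u s) - real (length u) * eta s\<bar> \<le> d * real (length u))"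
proof -
  have "(\<Sum>s\<in>strings b k. eta s) = (\<Sum>s\<in>strings b k. \<Sum>(c,l)\<leftarrow>D. l * real (ccl k c s))"
    using eta by simp
  also have "\<dots> = (\<Sum>(c,l)\<leftarrow>D. \<Sum>s\<in>strings b k. l * real (ccl k c s))" by (rule sum_list_swap)
  also have "\<dots> = (\<Sum>(c,l)\<leftarrow>D. l * real (length c))"
  proof -
    have "(\<Sum>s\<in>strings b k. l * real (ccl k c s)) = l * real (length c)" if "(c,l) \<in> set D" for c l
    proof -
      have cD: "c \<noteq> []" "\<forall>x\<in>set c. x < b" using D that by auto
      have "(\<Sum>s\<in>strings b k. l * real (ccl k c s)) = l * real (\<Sum>s\<in>strings b k. ccl k c s)"
        by (simp add: sum_distrib_left)
      also have "\<dots> = l * real (length c)" using sum_ccl[OF cD, of k] by simp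
      finally show ?thesis .
    qed
    then show ?thesis by (intro arg_cong[where f=sum_list] map_cong) auto
  qed
  finally have one: "(\<Sum>(c,l)\<leftarrow>D. l * real (length c)) = 1" using sum1 by simp
  define C where "C = (\<Sum>(c,l)\<leftarrow>D. real (length c) + 2 * real k)"
  have CC: "(\<Sum>(c,l)\<leftarrow>D. real (length c)) \<le> C"
    unfolding C_def by (induction D) auto
  have C0: "C \<ge> 0" unfolding C_def by (induction D) auto
  define M where "M = nat \<lceil>C + 2 * C / d\<rceil> + 1"
  have MC: "real M > C + 2 * C / d" unfolding M_def by linarith
  define u where "u = word D M"
  have l0: "\<forall>(c,l)\<in>set D. l \<ge> 0" using D by auto
  have e1: "\<bar>real (ccl k u s) - real M * eta s\<bar> \<le> C" if "s \<in> strings b k" for s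
    using word_est[OF l0, of k M s] eta that unfolding u_def C_def by simp
  have e2: "\<bar>real (length u) - real M\<bar> \<le> C"
    using word_est[OF l0, of k M "[]"] one CC unfolding u_def by (simp del: of_nat_add)
  have lu: "real (length u) > 2 * C / d" using e2 MC by linarith
  have "2 * C / d \<ge> 0" using C0 d by simp
  then have "u \<noteq> []" using lu by auto
  moreover have "\<forall>x\<in>set u. x < b" unfolding u_def by (rule word_set) (use D in auto)
  moreover have "\<bar>real (ccl k u s) - real (length u) * eta s\<bar> \<le> d * real (length u)"
    if s: "s \<in> strings b k" for s
  proof -
    have "\<bar>real (length u) * eta s - real M * eta s\<bar> = \<bar>real (length u) - real M\<bar> * eta s"
      using eb s by (simp add: abs_mult left_diff_distrib[symmetric])
    also have "\<dots> \<le> C * 1" using e2 eb s by (intro mult_mono) auto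
    finally have "\<bar>real (ccl k u s) - real (length u) * eta s\<bar> \<le> 2 * C" using e1[OF s] by linarith
    also have "2 * C \<le> d * real (length u)" using lu d by (simp add: field_simps)
    finally show ?thesis .
  qed
  ultimately show ?thesis by blast
qed

lemma approx_seq:
  assumes eta: "eta \<in> Delta b (Suc k)" and d: "d > 0"
  shows "\<exists>f K. (\<forall>q. f q < b) \<and>
     (\<forall>n\<ge>K. \<forall>s\<in>strings b (Suc k). \<bar>real (cnt f (Suc k) s 0 n) - real n * eta s\<bar> \<le> d * real n)"
proof -
  have nn: "\<forall>s\<in>strings b (Suc k). eta s \<ge> 0" and circ: "\<forall>v\<in>strings b k. (\<Sum>a<b. eta (a # v)) = (\<Sum>a<b. eta (v @ [a]))"
    and sum1: "(\<Sum>s\<in>strings b (Suc k). eta s) = 1"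
    using eta by (auto simp: Delta_def)
  have eb: "\<forall>s\<in>strings b (Suc k). 0 \<le> eta s \<and> eta s \<le> 1"
  proof
    fix s assume s: "s \<in> strings b (Suc k)"
    have "eta s \<le> (\<Sum>s\<in>strings b (Suc k). eta s)"
      using s nn finite_strings by (intro member_le_sum) auto
    then show "0 \<le> eta s \<and> eta s \<le> 1" using sum1 nn s by auto
  qed
  obtain D where D: "\<forall>(c,l)\<in>set D. c \<noteq> [] \<and> (\<forall>x\<in>set c. x < b) \<and> l \<ge> 0"
      "\<forall>s\<in>strings b (Suc k). eta s = (\<Sum>(c,l)\<leftarrow>D. l * real (ccl (Suc k) c s))"
    using decomp[OF nn circ] by blast
  obtain u where u: "u \<noteq> []" "\<forall>x\<in>set u. x < b"
      "\<forall>s\<in>strings b (Suc k). \<bar>real (ccl (Suc k) u s) - real (length u) * eta s\<bar> \<le> d / 2 * real (length u)"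
    using approx_word[OF D sum1 eb, of "d/2"] d by auto
  define f where "f = per u"
  define K where "K = nat \<lceil>2 * real (length u) / d\<rceil>"
  have fb: "\<forall>q. f q < b" unfolding f_def using per_less u by blast
  have "\<bar>real (cnt f (Suc k) s 0 n) - real n * eta s\<bar> \<le> d * real n"
    if n: "n \<ge> K" and s: "s \<in> strings b (Suc k)" for n s
  proof -
    define L where "L = length u"
    define q where "q = n div L"
    define r where "r = n mod L"
    have L0: "L > 0" using u by (simp add: L_def)
    have nqr: "n = q * L + r" by (simp add: q_def r_def)
    have rL: "r < L" using L0 by (simp add: r_def)
    have "cnt f (Suc k) s 0 n = cnt f (Suc k) s 0 (q * L) + cnt f (Suc k) s (0 + q * L) r"
      using nqr cnt_add by simp
    also have "cnt f (Suc k) s 0 (q * L) = q * ccl (Suc k) u s"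
      unfolding f_def L_def ccl_def by (rule cnt_periodic_mult) (rule per_periodic)
    finally have ce: "cnt f (Suc k) s 0 n = q * ccl (Suc k) u s + cnt f (Suc k) s (q * L) r" by simp
    have cr: "cnt f (Suc k) s (q * L) r \<le> r" by (rule cnt_le)
    have e1: "\<bar>real q * real (ccl (Suc k) u s) - real q * real L * eta s\<bar> \<le> real q * (d / 2 * real L)"
    proof -
      have "\<bar>real q * real (ccl (Suc k) u s) - real q * real L * eta s\<bar>
           = real q * \<bar>real (ccl (Suc k) u s) - real L * eta s\<bar>"
        by (simp add: abs_mult right_diff_distrib[symmetric] mult.assoc)
      also have "\<dots> \<le> real q * (d / 2 * real L)" using u(3) s unfolding L_def
        by (intro mult_left_mono) auto
      finally show ?thesis .
    qed
    have e2: "\<bar>real (cnt f (Suc k) s (q * L) r) - real r * eta s\<bar> \<le> real r"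
    proof -
      have "real r * eta s \<le> real r" using eb s by (simp add: mult_left_le)
      moreover have "real r * eta s \<ge> 0" using eb s by simp
      ultimately show ?thesis using cr by linarith
    qed
    have "real n = real q * real L + real r" using nqr by simp
    then have "real (cnt f (Suc k) s 0 n) - real n * eta s
       = (real q * real (ccl (Suc k) u s) - real q * real L * eta s) + (real (cnt f (Suc k) s (q * L) r) - real r * eta s)"
      using ce by (simp add: algebra_simps)
    then have "\<bar>real (cnt f (Suc k) s 0 n) - real n * eta s\<bar> \<le> real q * (d / 2 * real L) + real r"
      using e1 e2 abs_triangle_ineq[of "real q * real (ccl (Suc k) u s) - real q * real L * eta s"
          "real (cnt f (Suc k) s (q * L) r) - real r * eta s"] by linarith
    also have "real q * (d / 2 * real L) \<le> d / 2 * real n"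
      using nqr d by (simp add: algebra_simps)
    also have "real r \<le> d / 2 * real n"
    proof -
      have "real K \<ge> 2 * real L / d" unfolding K_def L_def by linarith
      then have "real n \<ge> 2 * real L / d" using n by linarith
      then have "d / 2 * real n \<ge> real L" using d by (simp add: field_simps)
      then show ?thesis using rL by linarith
    qed
    finally show ?thesis by simp
  qed
  then show ?thesis using fb by blast
qed


definition cc :: "nat \<Rightarrow> real \<Rightarrow> nat \<Rightarrow> int" where
  "cc b x n = \<lceil>real b ^ n * x\<rceil> - 1"

lemma cc_bounds: fixes x :: real shows "real_of_int (cc b x n) < real b ^ n * x" "real b ^ n * x \<le> real_of_int (cc b x n) + 1"
  unfolding cc_def by linarith+

lemma cc_eqI: fixes x :: real shows "real_of_int z < real b ^ n * x \<Longrightarrow> real b ^ n * x \<le> real_of_int z + 1 \<Longrightarrow> cc b x n = z"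
  unfolding cc_def by (subst ceiling_unique[of "z+1"]) auto

lemma cc_0: fixes x :: real shows "x \<in> {0<..1} \<Longrightarrow> cc b x 0 = 0"
  by (rule cc_eqI) auto

lemma cc_step:
  fixes x :: real
  assumes b: "b \<ge> 2"
  shows "int b * cc b x n \<le> cc b x (Suc n) \<and> cc b x (Suc n) \<le> int b * cc b x n + int b - 1"
proof -
  have b0: "real b > 0" using b by simp
  have "real b * real_of_int (cc b x n) < real b * (real b ^ n * x)"
    using cc_bounds(1)[where b=b and x=x and n=n] b0 by simp
  then have A: "real_of_int (int b * cc b x n) < real b ^ Suc n * x" by (simp add: mult.assoc)
  have "real b * (real b ^ n * x) \<le> real b * (real_of_int (cc b x n) + 1)"
    using cc_bounds(2)[where b=b and x=x and n=n] b0 by (intro mult_left_mono) auto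
  then have B: "real b ^ Suc n * x \<le> real_of_int (int b * cc b x n + int b)" by (simp add: algebra_simps)
  have C: "real_of_int (cc b x (Suc n)) < real b ^ Suc n * x" "real b ^ Suc n * x \<le> real_of_int (cc b x (Suc n)) + 1"
    by (rule cc_bounds(1), rule cc_bounds(2))
  from A C(2) have "int b * cc b x n < cc b x (Suc n) + 1" by linarith
  moreover from B C(1) have "cc b x (Suc n) < int b * cc b x n + int b" by linarith
  ultimately show ?thesis by linarith
qed

definition e0 :: "nat \<Rightarrow> real \<Rightarrow> nat \<Rightarrow> nat" where
  "e0 b x n = nat (cc b x (Suc n) - int b * cc b x n)"

lemma e0_props:
  assumes "b \<ge> 2"
  shows "e0 b x n < b" "int (e0 b x n) = cc b x (Suc n) - int b * cc b x n"
  using cc_step[OF assms, of x n] assms unfolding e0_def by auto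

lemma e0_partial:
  assumes "b \<ge> 2" "x \<in> {0<..1}"
  shows "(\<Sum>n<N. real (e0 b x n) / real b ^ Suc n) = real_of_int (cc b x N) / real b ^ N"
proof (induction N)
  case 0 then show ?case using cc_0[OF assms(2)] by simp
next
  case (Suc N)
  have b0: "real b > 0" using assms by simp
  have "real (e0 b x N) = real_of_int (cc b x (Suc N)) - real b * real_of_int (cc b x N)"
  proof -
    have "real_of_int (int (e0 b x N)) = real_of_int (cc b x (Suc N) - int b * cc b x N)"
      using e0_props(2)[OF assms(1), of x N] by simp
    then show ?thesis by simp
  qed
  then have "real (e0 b x N) / real b ^ Suc N
      = real_of_int (cc b x (Suc N)) / real b ^ Suc N - real_of_int (cc b x N) / real b ^ N"
    using b0 by (simp add: diff_divide_distrib)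
  then show ?case using Suc by simp
qed

lemma cc_lim:
  fixes x :: real
  assumes "b \<ge> 2"
  shows "(\<lambda>N. real_of_int (cc b x N) / real b ^ N) \<longlonglongrightarrow> x"
proof -
  have b0: "real b > 0" using assms by simp
  have bd: "norm (real_of_int (cc b x N) / real b ^ N - x) \<le> (1 / real b) ^ N" for N
  proof -
    have p: "real b ^ N > 0" using b0 by simp
    have A: "real_of_int (cc b x N) < x * real b ^ N" using cc_bounds(1)[where b=b and x=x and n=N]
      by (simp only: mult.commute)
    have B: "x * real b ^ N \<le> real_of_int (cc b x N) + 1" using cc_bounds(2)[where b=b and x=x and n=N]
      by (simp only: mult.commute)
    have A': "real_of_int (cc b x N) / real b ^ N < x" using A p by (simp only: pos_divide_less_eq)
    have B': "x \<le> (real_of_int (cc b x N) + 1) / real b ^ N" using B p by (simp only: pos_le_divide_eq)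
    have C: "(real_of_int (cc b x N) + 1) / real b ^ N = real_of_int (cc b x N) / real b ^ N + 1 / real b ^ N"
      by (rule add_divide_distrib)
    have D: "(1 / real b) ^ N = 1 / real b ^ N" by (rule power_one_over)
    show ?thesis using A' B' C D unfolding real_norm_def by linarith
  qed
  have "(\<lambda>N. (1 / real b) ^ N) \<longlonglongrightarrow> 0"
    by (rule LIMSEQ_power_zero) (use assms in simp)
  then have "(\<lambda>N. real_of_int (cc b x N) / real b ^ N - x) \<longlonglongrightarrow> 0"
    by (rule Lim_null_comparison[rotated]) (rule always_eventually, rule allI, rule bd)
  then show ?thesis by (simp add: LIM_zero_iff)
qed

lemma e0_sums:
  assumes "b \<ge> 2" "x \<in> {0<..1}"
  shows "(\<lambda>n. real (e0 b x n) / real b ^ Suc n) sums x"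
  unfolding sums_def using e0_partial[OF assms] cc_lim[OF assms(1)] by simp

lemma e0_nonterm:
  assumes "b \<ge> 2" "x \<in> {0<..1}"
  shows "\<exists>n\<ge>m. e0 b x n \<noteq> 0"
proof (rule ccontr)
  assume "\<not> ?thesis"
  then have z: "\<And>n. n \<ge> m \<Longrightarrow> e0 b x n = 0" by auto
  have b0: "real b > 0" using assms by simp
  have "real_of_int (cc b x (m + j)) / real b ^ (m + j) = real_of_int (cc b x m) / real b ^ m" for j
  proof (induction j)
    case (Suc j)
    have "real_of_int (cc b x (Suc (m + j))) / real b ^ Suc (m + j)
        = (\<Sum>n<Suc (m+j). real (e0 b x n) / real b ^ Suc n)" using e0_partial[OF assms] by simp
    also have "\<dots> = (\<Sum>n<m+j. real (e0 b x n) / real b ^ Suc n)" using z[of "m+j"] by simp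
    also have "\<dots> = real_of_int (cc b x (m + j)) / real b ^ (m + j)" using e0_partial[OF assms] by simp
    finally show ?case using Suc by simp
  qed simp
  then have "(\<lambda>j. real_of_int (cc b x (j + m)) / real b ^ (j + m)) \<longlonglongrightarrow> real_of_int (cc b x m) / real b ^ m"
    by (simp add: add.commute)
  moreover have "(\<lambda>j. real_of_int (cc b x (j + m)) / real b ^ (j + m)) \<longlonglongrightarrow> x"
    using cc_lim[OF assms(1)] by (rule LIMSEQ_ignore_initial_segment)
  ultimately have "x = real_of_int (cc b x m) / real b ^ m" using LIMSEQ_unique by blast
  then show False using cc_bounds(1)[where b=b and x=x and n=m] b0 by (simp add: field_simps)
qed

lemma expansion_unique:
  assumes b: "b \<ge> 2" and eb: "\<forall>n. e n < b" and es: "(\<lambda>n. real (e n) / real b ^ Suc n) sums x"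
    and nt: "\<forall>m. \<exists>n\<ge>m. e n \<noteq> 0"
  shows "e n = e0 b x n"
proof -
  have b0: "real b > 1" using b by simp
  define f where "f = (\<lambda>n. real (e n) / real b ^ Suc n)"
  define Z where "Z N = (\<Sum>n<N. real (e n) * real b ^ (N - Suc n))" for N
  have Zrec: "Z (Suc N) = real b * Z N + real (e N)" for N
  proof -
    have "Z (Suc N) = (\<Sum>n<N. real (e n) * real b ^ (Suc N - Suc n)) + real (e N)"
      by (simp add: Z_def)
    also have "(\<Sum>n<N. real (e n) * real b ^ (Suc N - Suc n)) = real b * Z N"
      unfolding Z_def sum_distrib_left
    proof (intro sum.cong refl)
      fix n assume "n \<in> {..<N}"
      then have "Suc N - Suc n = Suc (N - Suc n)" by auto
      then show "real (e n) * real b ^ (Suc N - Suc n) = real b * (real (e n) * real b ^ (N - Suc n))"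
        by simp
    qed
    finally show ?thesis .
  qed
  have ZS: "real b ^ N * (\<Sum>n<N. f n) = Z N" for N
  proof (induction N)
    case 0 then show ?case by (simp add: Z_def)
  next
    case (Suc N)
    have fN: "real b ^ Suc N * f N = real (e N)" using b0 by (simp add: f_def)
    have "real b ^ Suc N * (\<Sum>n<Suc N. f n) = real b ^ Suc N * (\<Sum>n<N. f n) + real b ^ Suc N * f N"
      by (simp add: distrib_left)
    also have "real b ^ Suc N * (\<Sum>n<N. f n) = real b * (real b ^ N * (\<Sum>n<N. f n))" by simp
    finally have "real b ^ Suc N * (\<Sum>n<Suc N. f n) = real b * (real b ^ N * (\<Sum>n<N. f n)) + real (e N)"
      using fN by simp
    then show ?case using Suc Zrec by simp
  qed
  have Zint: "Z N \<in> \<int>" for N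
    by (induction N) (auto simp: Zrec Z_def)
  have key: "cc b x N = \<lfloor>Z N\<rfloor> \<and> Z N = of_int \<lfloor>Z N\<rfloor>" for N
  proof -
    define T where "T = x - (\<Sum>n<N. f n)"
    have fs: "f sums x" unfolding f_def by (rule es)
    have Ts: "(\<lambda>i. f (i + N)) sums T"
      using sums_iff_shift[of f N T] fs by (simp add: T_def)
    define g where "g i = (real b - 1) / real b ^ Suc N * (1 / real b) ^ i" for i
    have gs: "g sums ((real b - 1) / real b ^ Suc N * (1 / (1 - 1 / real b)))"
      unfolding g_def using b0 by (intro sums_mult geometric_sums) auto
    have "(real b - 1) / real b ^ Suc N * (1 / (1 - 1 / real b)) = 1 / real b ^ N"
      using b0 by (simp add: field_simps)
    then have gs': "g sums (1 / real b ^ N)" using gs by simp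
    have fg: "f (i + N) \<le> g i" for i
    proof -
      have "real (e (i + N)) \<le> real b - 1" using eb[rule_format, of "i+N"] by linarith
      then have "f (i + N) \<le> (real b - 1) / real b ^ Suc (i + N)"
        unfolding f_def using b0 by (intro divide_right_mono) auto
      also have "\<dots> = g i" unfolding g_def using b0 by (simp add: field_simps power_add)
      finally show ?thesis .
    qed
    have T1: "T \<le> 1 / real b ^ N" using sums_le[OF _ Ts gs'] fg by auto
    obtain n where n: "n \<ge> N" "e n \<noteq> 0" using nt by blast
    have fpos: "0 < f n" unfolding f_def using n b0 by (intro divide_pos_pos) auto
    have nN: "(n - N) + N = n" using n by simp
    have "0 < suminf (\<lambda>i. f (i + N))"
    proof (rule suminf_pos2[where i="n - N"])
      show "summable (\<lambda>i. f (i + N))" using Ts by (rule sums_summable)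
      show "\<And>i. 0 \<le> f (i + N)" by (simp add: f_def)
      show "0 < f ((n - N) + N)" using fpos nN by simp
    qed
    then have T0: "T > 0" using sums_unique[OF Ts] by simp
    have E1: "real b ^ N * x = Z N + real b ^ N * T" using ZS[of N] by (simp add: T_def algebra_simps)
    have E2: "real b ^ N * T \<le> 1" using T1 b0 by (simp add: field_simps)
    have E3: "real b ^ N * T > 0" using T0 b0 by simp
    obtain z where z: "Z N = of_int z" using Zint[of N] by (auto elim: Ints_cases)
    have "cc b x N = z" by (rule cc_eqI) (use E1 E2 E3 z in linarith)+
    then have ZZ: "Z N = of_int \<lfloor>Z N\<rfloor>" and "cc b x N = \<lfloor>Z N\<rfloor>" using z by simp_all
    then show ?thesis using ZZ by simp
  qed
  have "real (e n) = Z (Suc n) - real b * Z n" using Zrec by simp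
  also have "\<dots> = real_of_int (cc b x (Suc n) - int b * cc b x n)" using key[of n] key[of "Suc n"] by simp
  also have "\<dots> = real_of_int (int (e0 b x n))" using e0_props(2)[OF b, of x n] by simp
  also have "\<dots> = real (e0 b x n)" by simp
  finally show ?thesis by simp
qed

lemma digit_seq_e0:
  assumes "b \<ge> 2" "x \<in> {0<..1}"
  shows "digit_seq b x = e0 b x"
  unfolding digit_seq_def
proof (rule the_equality)
  show "(\<forall>n. e0 b x n < b) \<and> (\<lambda>n. real (e0 b x n) / real b ^ Suc n) sums x \<and> (\<forall>m. \<exists>n\<ge>m. e0 b x n \<noteq> 0)"
    using e0_props(1)[OF assms(1)] e0_sums[OF assms] e0_nonterm[OF assms] by blast
  fix e assume "(\<forall>n. e n < b) \<and> (\<lambda>n. real (e n) / real b ^ Suc n) sums x \<and> (\<forall>m. \<exists>n\<ge>m. e n \<noteq> 0)"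
  then show "e = e0 b x" using expansion_unique[OF assms(1)] by blast
qed

lemma digit_Suc: "b \<ge> 2 \<Longrightarrow> x \<in> {0<..1} \<Longrightarrow> digit b (Suc p) x = e0 b x p"
  by (simp add: digit_def digit_seq_e0)

lemma digit_less: "b \<ge> 2 \<Longrightarrow> x \<in> {0<..1} \<Longrightarrow> digit b (Suc p) x < b"
  using digit_Suc e0_props(1) by simp

fun Pv :: "nat \<Rightarrow> (nat \<Rightarrow> nat) \<Rightarrow> nat \<Rightarrow> nat" where
  "Pv b e 0 = 0"
| "Pv b e (Suc n) = b * Pv b e n + e n"

lemma Pv_bounds:
  assumes eb: "\<forall>q. e q < b"
  shows "Pv b e n * b ^ d \<le> Pv b e (n + d) \<and> Pv b e (n + d) < (Pv b e n + 1) * b ^ d"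
proof (induction d)
  case 0 then show ?case by simp
next
  case (Suc d)
  have lo: "Pv b e n * b ^ Suc d \<le> Pv b e (n + Suc d)"
  proof -
    have "Pv b e n * b ^ Suc d = b * (Pv b e n * b ^ d)" by simp
    also have "\<dots> \<le> b * Pv b e (n + d)" using Suc by simp
    also have "\<dots> \<le> Pv b e (n + Suc d)" by simp
    finally show ?thesis .
  qed
  have "Pv b e (n + Suc d) = b * Pv b e (n + d) + e (n + d)" by simp
  also have "\<dots> < b * Pv b e (n + d) + b" using eb by simp
  also have "\<dots> = b * (Pv b e (n + d) + 1)" by simp
  also have "\<dots> \<le> b * ((Pv b e n + 1) * b ^ d)" using Suc by (intro mult_left_mono) auto
  also have "\<dots> = (Pv b e n + 1) * b ^ Suc d" by (simp add: algebra_simps)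
  finally show ?case using lo by simp
qed

lemma Pv_cong: "(\<And>q. q < n \<Longrightarrow> e q = e' q) \<Longrightarrow> Pv b e n = Pv b e' n"
  by (induction n) auto

lemma cc_Pv:
  fixes x :: real
  assumes b: "b \<ge> 2" and eb: "\<forall>q. e q < b"
    and lo: "real (Pv b e N) < real b ^ N * x" and hi: "real b ^ N * x \<le> real (Pv b e N) + 1"
    and n: "n \<le> N"
  shows "cc b x n = int (Pv b e n)"
proof -
  obtain d where d: "N = n + d" using n le_Suc_ex by blast
  have pb: "real b ^ d > 0" using b by simp
  have bd: "Pv b e n * b ^ d \<le> Pv b e N" "Pv b e N + 1 \<le> (Pv b e n + 1) * b ^ d"
    using Pv_bounds[OF eb, of n d] d by auto
  have bd': "real (Pv b e n) * real b ^ d \<le> real (Pv b e N)" "real (Pv b e N) + 1 \<le> (real (Pv b e n) + 1) * real b ^ d"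
  proof -
    have "real (Pv b e n * b ^ d) \<le> real (Pv b e N)" "real (Pv b e N + 1) \<le> real ((Pv b e n + 1) * b ^ d)"
      using bd by (simp_all only: of_nat_le_iff)
    then show "real (Pv b e n) * real b ^ d \<le> real (Pv b e N)" "real (Pv b e N) + 1 \<le> (real (Pv b e n) + 1) * real b ^ d"
      by (simp_all add: algebra_simps)
  qed
  have eq: "real b ^ N * x = real b ^ d * (real b ^ n * x)" using d by (simp add: power_add)
  have "real b ^ d * real (Pv b e n) < real b ^ d * (real b ^ n * x)"
    using bd'(1) lo[unfolded eq] mult.commute[of "real b ^ d" "real (Pv b e n)"] by linarith
  then have A: "real (Pv b e n) < real b ^ n * x" using pb by simp
  have "real b ^ d * (real b ^ n * x) \<le> real b ^ d * (real (Pv b e n) + 1)"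
    using bd'(2) hi[unfolded eq] mult.commute[of "real b ^ d" "real (Pv b e n) + 1"] by linarith
  then have B: "real b ^ n * x \<le> real (Pv b e n) + 1" using pb by simp
  show ?thesis by (rule cc_eqI) (use A B in auto)
qed

lemma cc_x0:
  assumes b: "b \<ge> 2" and x: "x \<in> {0<..1}"
  shows "cc b x n = int (Pv b (\<lambda>q. digit b (Suc q) x) n)"
proof (induction n)
  case 0 then show ?case using cc_0[OF x] by simp
next
  case (Suc n)
  have "cc b x (Suc n) = int b * cc b x n + int (e0 b x n)" using e0_props(2)[OF b, of x n] by simp
  then show ?case using Suc digit_Suc[OF b x] by simp
qed

lemma cyl_interval:
  assumes b: "b \<ge> 2" and x0: "x0 \<in> {0<..1}" and eb: "\<forall>q. e q < b"
    and pre: "\<forall>q<N0. e q = digit b (Suc q) x0" and N: "N0 \<le> N" and r: "1 / real b ^ N0 < r"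
  shows "\<exists>c d. c < d \<and> {c<..<d} \<subseteq> {0<..1} \<and> {c<..<d} \<subseteq> ball x0 r \<and>
           (\<forall>x\<in>{c<..<d}. \<forall>q<N. digit b (Suc q) x = e q)"
proof -
  define P where "P = Pv b e N"
  have pN: "real b ^ N > 0" using b by simp
  have "Pv b e (0 + N) < (Pv b e 0 + 1) * b ^ N" using Pv_bounds[OF eb, of 0 N] by blast
  then have P1: "P + 1 \<le> b ^ N" by (simp add: P_def)
  then have "real (P + 1) \<le> real (b ^ N)" by (simp only: of_nat_le_iff)
  then have P1': "real P + 1 \<le> real b ^ N" by simp
  define c where "c = real P / real b ^ N"
  define d where "d = (real P + 1) / real b ^ N"
  have cd: "c < d" using pN by (simp add: c_def d_def divide_strict_right_mono)
  have memb: "real P < real b ^ N * x \<and> real b ^ N * x < real P + 1" if "x \<in> {c<..<d}" for x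
  proof -
    have "c < x" "x < d" using that by auto
    then show ?thesis using pN by (simp add: c_def d_def pos_divide_less_eq pos_less_divide_eq mult.commute)
  qed
  have sub1: "{c<..<d} \<subseteq> {0<..1}"
  proof
    fix x assume x: "x \<in> {c<..<d}"
    have "0 \<le> c" by (simp add: c_def)
    moreover have "d \<le> 1" using P1' pN by (simp add: d_def)
    ultimately show "x \<in> {0<..1}" using x by auto
  qed
  have ccx: "cc b x n = int (Pv b e n)" if "x \<in> {c<..<d}" "n \<le> N" for x n
    using memb[OF that(1)] that(2) by (intro cc_Pv[OF b eb]) (auto simp: P_def)
  have dig: "\<forall>q<N. digit b (Suc q) x = e q" if x: "x \<in> {c<..<d}" for x
  proof (intro allI impI)
    fix q assume q: "q < N"
    have xx: "x \<in> {0<..1}" using sub1 x by auto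
    have "int (digit b (Suc q) x) = cc b x (Suc q) - int b * cc b x q"
      using digit_Suc[OF b xx] e0_props(2)[OF b] by simp
    also have "\<dots> = int (Pv b e (Suc q)) - int b * int (Pv b e q)" using ccx[OF x] q by simp
    also have "\<dots> = int (e q)" by simp
    finally show "digit b (Suc q) x = e q" by simp
  qed
  have sub2: "{c<..<d} \<subseteq> ball x0 r"
  proof
    fix x assume x: "x \<in> {c<..<d}"
    have xx: "x \<in> {0<..1}" using sub1 x by auto
    have "cc b x N0 = int (Pv b e N0)" using ccx[OF x N] .
    also have "Pv b e N0 = Pv b (\<lambda>q. digit b (Suc q) x0) N0" using pre by (intro Pv_cong) auto
    also have "int \<dots> = cc b x0 N0" using cc_x0[OF b x0] by simp
    finally have eqc: "cc b x N0 = cc b x0 N0" .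
    have "real_of_int (cc b x N0) < real b ^ N0 * x" "real b ^ N0 * x \<le> real_of_int (cc b x N0) + 1"
         "real_of_int (cc b x0 N0) < real b ^ N0 * x0" "real b ^ N0 * x0 \<le> real_of_int (cc b x0 N0) + 1"
      by (rule cc_bounds)+
    then have "\<bar>real b ^ N0 * x - real b ^ N0 * x0\<bar> < 1" using eqc by linarith
    then have "real b ^ N0 * \<bar>x - x0\<bar> < 1" by (simp add: abs_mult right_diff_distrib[symmetric])
    then have "\<bar>x - x0\<bar> < 1 / real b ^ N0" using b by (simp add: field_simps)
    then show "x \<in> ball x0 r" using r by (simp add: dist_real_def abs_minus_commute)
  qed
  show ?thesis using cd sub1 sub2 dig by blast
qed


definition cyl :: "nat \<Rightarrow> (nat \<Rightarrow> bool) \<Rightarrow> (nat \<Rightarrow> bool) set" where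
  "cyl n g = {h. \<forall>i<n. h i = g i}"

lemma topspace_cantor[simp]: "topspace cantor_space = UNIV"
  by (simp add: cantor_space_def PiE_UNIV_domain)

lemma cyl_open: "openin cantor_space (cyl n g)"
proof (induction n)
  case 0
  have "cyl 0 g = topspace cantor_space" by (simp add: cyl_def)
  then show ?case using openin_topspace[of cantor_space] by simp
next
  case (Suc n)
  have "openin cantor_space {x \<in> topspace cantor_space. x n \<in> {g n}}"
    unfolding cantor_space_def
    by (rule openin_continuous_map_preimage[OF continuous_map_product_projection]) auto
  then have o: "openin cantor_space {x. x n = g n}" by simp
  have "cyl (Suc n) g = cyl n g \<inter> {x. x n = g n}" by (auto simp: cyl_def less_Suc_eq)
  then show ?case using Suc o by (simp add: openin_Int)
qed

lemma cyl_mono: "n \<le> n' \<Longrightarrow> (\<forall>i<n. g' i = g i) \<Longrightarrow> cyl n' g' \<subseteq> cyl n g"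
  by (auto simp: cyl_def)

lemma cyl_basic:
  assumes "openin cantor_space U" "h \<in> U"
  shows "\<exists>n. cyl n h \<subseteq> U"
proof -
  obtain V where V: "finite {i \<in> UNIV. V i \<noteq> topspace (discrete_topology (UNIV::bool set))}"
      "h \<in> Pi\<^sub>E UNIV V" "Pi\<^sub>E UNIV V \<subseteq> U"
    using assms unfolding cantor_space_def openin_product_topology_alt by blast
  define F where "F = {i. V i \<noteq> UNIV}"
  have fF: "finite F" using V(1) by (simp add: F_def)
  define n where "n = Suc (Max (insert 0 F))"
  have "i < n" if "i \<in> F" for i
    using fF that unfolding n_def by (simp add: le_imp_less_Suc)
  then have "cyl n h \<subseteq> Pi\<^sub>E UNIV V"
  proof (intro subsetI)
    fix x assume x: "x \<in> cyl n h"
    have "x i \<in> V i" for i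
    proof (cases "i \<in> F")
      case True
      then have "x i = h i" using x \<open>\<And>i. i \<in> F \<Longrightarrow> i < n\<close> by (auto simp: cyl_def)
      then show ?thesis using V(2) by (auto simp: PiE_UNIV_domain)
    next
      case False then show ?thesis by (simp add: F_def)
    qed
    then show "x \<in> Pi\<^sub>E UNIV V" by (simp add: PiE_UNIV_domain)
  qed
  then show ?thesis using V(3) by blast
qed

lemma KP:
  assumes "nowhere_dense_in cantor_space S"
  shows "\<exists>n' g'. n \<le> n' \<and> (\<forall>i<n. g' i = g i) \<and> cyl n' g' \<inter> S = {}"
proof -
  have int: "cantor_space interior_of (cantor_space closure_of S) = {}"
    using assms by (simp add: nowhere_dense_in_def)
  have "\<not> cyl n g \<subseteq> cantor_space closure_of S"
  proof
    assume "cyl n g \<subseteq> cantor_space closure_of S"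
    then have "cyl n g \<subseteq> cantor_space interior_of (cantor_space closure_of S)"
      using cyl_open by (rule interior_of_maximal)
    moreover have "g \<in> cyl n g" by (simp add: cyl_def)
    ultimately show False using int by auto
  qed
  then obtain g' where g': "g' \<in> cyl n g" "g' \<notin> cantor_space closure_of S" by auto
  then obtain T where T: "g' \<in> T" "openin cantor_space T" "T \<inter> S = {}"
    unfolding in_closure_of by auto
  obtain n'' where n'': "cyl n'' g' \<subseteq> T" using cyl_basic[OF T(2,1)] by blast
  define n' where "n' = max n n''"
  have "cyl n' g' \<subseteq> cyl n'' g'" unfolding n'_def by (rule cyl_mono) auto
  then have "cyl n' g' \<inter> S = {}" using n'' T(3) by auto
  moreover have "\<forall>i<n. g' i = g i" using g'(1) by (simp add: cyl_def)
  ultimately show ?thesis unfolding n'_def by (intro exI[of _ "max n n''"] exI[of _ g']) auto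
qed

lemma KP_iter:
  fixes G :: "nat \<Rightarrow> (nat \<Rightarrow> bool) set"
  assumes "\<And>m. nowhere_dense_in cantor_space (G m)"
  shows "\<exists>n' g'. n \<le> n' \<and> (\<forall>i<n. g' i = g i) \<and> (\<forall>m\<le>j. cyl n' g' \<inter> G m = {})"
proof (induction j)
  case 0
  then show ?case using KP[OF assms[of 0], of n g] by auto
next
  case (Suc j)
  then obtain n' g' where ng: "n \<le> n'" "\<forall>i<n. g' i = g i" "\<forall>m\<le>j. cyl n' g' \<inter> G m = {}" by blast
  obtain n'' g'' where ng2: "n' \<le> n''" "\<forall>i<n'. g'' i = g' i" "cyl n'' g'' \<inter> G (Suc j) = {}"
    using KP[OF assms[of "Suc j"], of n' g'] by blast
  have sub: "cyl n'' g'' \<subseteq> cyl n' g'" using ng2 by (intro cyl_mono) auto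
  show ?case
  proof (intro exI[of _ n''] exI[of _ g''] conjI allI impI)
    show "n \<le> n''" using ng ng2 by simp
    show "g'' i = g i" if "i < n" for i using ng ng2 that by auto
    show "cyl n'' g'' \<inter> G m = {}" if "m \<le> Suc j" for m
    proof (cases "m = Suc j")
      case True then show ?thesis using ng2 by simp
    next
      case False
      then have "m \<le> j" using that by simp
      then have "cyl n' g' \<inter> G m = {}" using ng(3) by simp
      then show ?thesis using sub by blast
    qed
  qed
qed

lemma step_exists:
  fixes G :: "nat \<Rightarrow> (nat \<Rightarrow> bool) set"
  assumes "\<And>m. nowhere_dense_in cantor_space (G m)"
  shows "\<exists>T'. T < T' \<and> (\<forall>\<sigma>. \<sigma> \<subseteq> {..<T} \<longrightarrow> (\<exists>g. (\<forall>i<T. g i = (i \<in> \<sigma>)) \<and> (\<forall>m\<le>j. cyl T' g \<inter> G m = {})))"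
proof -
  have "\<forall>\<sigma>\<in>Pow {..<T}. \<exists>ng. T \<le> fst ng \<and> (\<forall>i<T. snd ng i = (i \<in> \<sigma>)) \<and> (\<forall>m\<le>j. cyl (fst ng) (snd ng) \<inter> G m = {})"
    using KP_iter[OF assms] by fastforce
  then obtain F where F: "\<forall>\<sigma>\<in>Pow {..<T}. T \<le> fst (F \<sigma>) \<and> (\<forall>i<T. snd (F \<sigma>) i = (i \<in> \<sigma>)) \<and> (\<forall>m\<le>j. cyl (fst (F \<sigma>)) (snd (F \<sigma>)) \<inter> G m = {})"
    by (rule bchoice[elim_format]) blast
  define T' where "T' = Suc (Max (insert T ((\<lambda>\<sigma>. fst (F \<sigma>)) ` Pow {..<T})))"
  have fin: "finite (insert T ((\<lambda>\<sigma>. fst (F \<sigma>)) ` Pow {..<T}))" by simp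
  have TT: "T < T'" unfolding T'_def using fin by (simp add: le_imp_less_Suc)
  have "\<exists>g. (\<forall>i<T. g i = (i \<in> \<sigma>)) \<and> (\<forall>m\<le>j. cyl T' g \<inter> G m = {})" if "\<sigma> \<subseteq> {..<T}" for \<sigma>
  proof -
    have s: "\<sigma> \<in> Pow {..<T}" using that by simp
    have "fst (F \<sigma>) \<le> T'" unfolding T'_def using fin s by (simp add: le_SucI)
    then have "cyl T' (snd (F \<sigma>)) \<subseteq> cyl (fst (F \<sigma>)) (snd (F \<sigma>))" by (intro cyl_mono) auto
    then show ?thesis using F s by (intro exI[of _ "snd (F \<sigma>)"]) blast
  qed
  then show ?thesis using TT by blast
qed

lemma talagrand:
  assumes "meager_ideal I"
  shows "\<exists>t. strict_mono t \<and> (\<forall>A. (\<forall>J. \<exists>j\<ge>J. {t j..<t (Suc j)} \<subseteq> A) \<longrightarrow> A \<notin> I)"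
proof -
  have idl: "is_ideal I" and mg: "meager_in cantor_space ((\<lambda>A n. n \<in> A) ` I)"
    using assms by (auto simp: meager_ideal_def)
  obtain F where F: "countable F" "\<forall>T\<in>F. nowhere_dense_in cantor_space T" "(\<lambda>A n. n \<in> A) ` I \<subseteq> \<Union>F"
    using mg unfolding meager_in_def by blast
  have "{} \<in> I" using idl by (auto simp: is_ideal_def)
  then have "F \<noteq> {}" using F(3) by auto
  define G where "G = from_nat_into F"
  have rG: "range G = F" unfolding G_def using F \<open>F \<noteq> {}\<close> by simp
  have ndG: "\<And>m. nowhere_dense_in cantor_space (G m)" using F(2) rG by auto
  define Q where "Q j T T' = (T < T' \<and> (\<forall>\<sigma>. \<sigma> \<subseteq> {..<T} \<longrightarrow> (\<exists>g. (\<forall>i<T. g i = (i \<in> \<sigma>)) \<and> (\<forall>m\<le>j. cyl T' g \<inter> G m = {}))))" for j T T'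
  define t where "t = rec_nat 0 (\<lambda>j T. SOME T'. Q j T T')"
  have t0: "t 0 = 0" by (simp add: t_def)
  have tS: "t (Suc j) = (SOME T'. Q j (t j) T')" for j by (simp add: t_def)
  have Qt: "Q j (t j) (t (Suc j))" for j
  proof -
    have "\<exists>T'. Q j (t j) T'" unfolding Q_def by (rule step_exists[OF ndG])
    then show ?thesis unfolding tS by (rule someI_ex)
  qed
  have smt: "strict_mono t" using Qt by (intro strict_monoI_Suc) (simp add: Q_def)
  define gsel where "gsel j \<sigma> = (SOME g. (\<forall>i<t j. g i = (i \<in> \<sigma>)) \<and> (\<forall>m\<le>j. cyl (t (Suc j)) g \<inter> G m = {}))" for j \<sigma>
  have gsel: "(\<forall>i<t j. gsel j \<sigma> i = (i \<in> \<sigma>)) \<and> (\<forall>m\<le>j. cyl (t (Suc j)) (gsel j \<sigma>) \<inter> G m = {})"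
    if "\<sigma> \<subseteq> {..<t j}" for j \<sigma>
  proof -
    have "\<forall>\<sigma>. \<sigma> \<subseteq> {..<t j} \<longrightarrow> (\<exists>g. (\<forall>i<t j. g i = (i \<in> \<sigma>)) \<and> (\<forall>m\<le>j. cyl (t (Suc j)) g \<inter> G m = {}))"
      using Qt[of j] unfolding Q_def by blast
    then have "\<exists>g. (\<forall>i<t j. g i = (i \<in> \<sigma>)) \<and> (\<forall>m\<le>j. cyl (t (Suc j)) g \<inter> G m = {})"
      using that by blast
    then show ?thesis unfolding gsel_def by (rule someI_ex)
  qed
  have "A \<notin> I" if A: "\<forall>J. \<exists>j\<ge>J. {t j..<t (Suc j)} \<subseteq> A" for A
  proof
    assume AI: "A \<in> I"
    define add where "add j S = (if {t j..<t (Suc j)} \<subseteq> A then {i\<in>{t j..<t (Suc j)}. gsel j S i} else {})" for j S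
    define Bp where "Bp = rec_nat {} (\<lambda>j S. S \<union> add j S)"
    have Bp0: "Bp 0 = {}" by (simp add: Bp_def)
    have BpS: "Bp (Suc j) = Bp j \<union> add j (Bp j)" for j by (simp add: Bp_def)
    have addsub: "add j S \<subseteq> {t j..<t (Suc j)}" for j S by (auto simp: add_def)
    have addA: "add j S \<subseteq> A" for j S by (auto simp: add_def)
    have Bplt: "Bp j \<subseteq> {..<t j}" for j
    proof (induction j)
      case (Suc j)
      have "t j < t (Suc j)" using smt by (simp add: strict_mono_def)
      then show ?case using Suc addsub[of j "Bp j"] by (auto simp: BpS)
    qed (simp add: Bp0)
    define B where "B = (\<Union>j. Bp j)"
    have BA: "B \<subseteq> A"
    proof -
      have "Bp j \<subseteq> A" for j by (induction j) (use addA in \<open>auto simp: Bp0 BpS\<close>)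
      then show ?thesis by (auto simp: B_def)
    qed
    have Bmono: "Bp j \<subseteq> Bp (j + d)" for j d by (induction d) (auto simp: BpS)
    have Bcut: "i \<in> B \<longleftrightarrow> i \<in> Bp j" if "i < t j" for i j
    proof
      assume "i \<in> B"
      then obtain j' where j': "i \<in> Bp j'" by (auto simp: B_def)
      show "i \<in> Bp j"
      proof (cases "j' \<le> j")
        case True then show ?thesis using Bmono[of j' "j - j'"] j' by auto
      next
        case False
        have "i \<in> Bp (j + d) \<Longrightarrow> i \<in> Bp j" for d
        proof (induction d)
          case (Suc d)
          have "t j \<le> t (j + d)" using smt by (simp add: strict_mono_less_eq)
          then have "i \<notin> add (j + d) (Bp (j + d))" using addsub[of "j+d"] that by fastforce
          then show ?case using Suc by (simp add: BpS)
        qed simp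
        moreover obtain d where "j' = j + d" using False le_Suc_ex[of j j'] by auto
        ultimately show ?thesis using j' by blast
      qed
    qed (auto simp: B_def)
    have "B \<in> I" using idl AI BA by (auto simp: is_ideal_def)
    then have "(\<lambda>n. n \<in> B) \<in> \<Union>F" using F(3) by auto
    then obtain m where m: "(\<lambda>n. n \<in> B) \<in> G m" using rG by auto
    obtain j where j: "j \<ge> m" "{t j..<t (Suc j)} \<subseteq> A" using A by blast
    let ?g = "gsel j (Bp j)"
    have gp: "\<forall>i<t j. ?g i = (i \<in> Bp j)" "cyl (t (Suc j)) ?g \<inter> G m = {}"
      using gsel[OF Bplt[of j]] j(1) by auto
    have "(\<lambda>n. n \<in> B) \<in> cyl (t (Suc j)) ?g"
      unfolding cyl_def
    proof (intro CollectI allI impI)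
      fix i assume i: "i < t (Suc j)"
      show "(i \<in> B) = ?g i"
      proof (cases "i < t j")
        case True then show ?thesis using Bcut[OF True] gp(1) by simp
      next
        case False
        have "i \<in> B \<longleftrightarrow> i \<in> Bp (Suc j)" using Bcut[OF i] .
        also have "\<dots> \<longleftrightarrow> i \<in> add j (Bp j)" using Bplt[of j] False by (auto simp: BpS)
        also have "\<dots> \<longleftrightarrow> ?g i" using j(2) i False by (auto simp: add_def)
        finally show ?thesis .
      qed
    qed
    then show False using gp(2) m by auto
  qed
  then show ?thesis using smt by blast
qed


lemma reg1:
  assumes "regular_matrix a" "z \<longlonglongrightarrow> L"
  shows "summable (\<lambda>i. a n i * z i)" "(\<lambda>n. \<Sum>i. a n i * z i) \<longlonglongrightarrow> L"
proof -
  have H0: "\<forall>d (z'::nat\<Rightarrow>nat\<Rightarrow>real) (\<eta>::nat\<Rightarrow>real). (\<forall>j<d. (\<lambda>i. z' i j) \<longlonglongrightarrow> \<eta> j) \<longrightarrow>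
        (\<forall>n. \<forall>j<d. summable (\<lambda>i. a n i * z' i j)) \<and> (\<forall>j<d. (\<lambda>n. \<Sum>i. a n i * z' i j) \<longlonglongrightarrow> \<eta> j)"
    using assms(1) unfolding regular_matrix_def by blast
  note H = H0[THEN spec[where x=1], THEN spec[where x="\<lambda>i j. z i"], THEN spec[where x="\<lambda>j. L"]]
  have "(\<forall>n. \<forall>j<(1::nat). summable (\<lambda>i. a n i * z i)) \<and> (\<forall>j<(1::nat). (\<lambda>n. \<Sum>i. a n i * z i) \<longlonglongrightarrow> L)"
    using mp[OF H] assms(2) by simp
  then show "summable (\<lambda>i. a n i * z i)" "(\<lambda>n. \<Sum>i. a n i * z i) \<longlonglongrightarrow> L"
    by auto
qed

lemma l1_of_null:
  fixes c :: "nat \<Rightarrow> real"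
  assumes H: "\<And>z. z \<longlonglongrightarrow> 0 \<Longrightarrow> summable (\<lambda>i. c i * z i)"
  shows "summable (\<lambda>i. \<bar>c i\<bar>)"
proof (rule ccontr)
  assume ns: "\<not> summable (\<lambda>i. \<bar>c i\<bar>)"
  have big: "\<exists>N'. N < N' \<and> real K \<le> (\<Sum>i\<in>{N..<N'}. \<bar>c i\<bar>)" for N K
  proof -
    have "\<not> (\<forall>n. (\<Sum>i<n. \<bar>c i\<bar>) \<le> real K + (\<Sum>i<N. \<bar>c i\<bar>))"
      using ns summableI_nonneg_bounded[of "\<lambda>i. \<bar>c i\<bar>"] by auto
    then obtain N' where N': "(\<Sum>i<N'. \<bar>c i\<bar>) > real K + (\<Sum>i<N. \<bar>c i\<bar>)" by (auto simp: not_le)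
    have NN: "N < N'"
    proof (rule ccontr)
      assume "\<not> N < N'"
      then have "(\<Sum>i<N'. \<bar>c i\<bar>) \<le> (\<Sum>i<N. \<bar>c i\<bar>)" by (intro sum_mono2) auto
      then show False using N' by simp
    qed
    have "(\<Sum>i<N'. \<bar>c i\<bar>) = (\<Sum>i<N. \<bar>c i\<bar>) + (\<Sum>i\<in>{N..<N'}. \<bar>c i\<bar>)"
    proof -
      have "{..<N'} = {..<N} \<union> {N..<N'}" using NN by auto
      moreover have "(\<Sum>i\<in>{..<N} \<union> {N..<N'}. \<bar>c i\<bar>) = (\<Sum>i<N. \<bar>c i\<bar>) + (\<Sum>i\<in>{N..<N'}. \<bar>c i\<bar>)"
        by (rule sum.union_disjoint) auto
      ultimately show ?thesis by simp
    qed
    then show ?thesis using N' NN by (intro exI[of _ N']) auto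
  qed
  define nxt where "nxt m N = (SOME N'. N < N' \<and> real (Suc m) \<le> (\<Sum>i\<in>{N..<N'}. \<bar>c i\<bar>))" for m N
  have nxt: "N < nxt m N \<and> real (Suc m) \<le> (\<Sum>i\<in>{N..<nxt m N}. \<bar>c i\<bar>)" for m N
    unfolding nxt_def using big[of N "Suc m"] by (rule someI_ex)
  define B where "B = rec_nat 0 nxt"
  have B0: "B 0 = 0" and BS: "B (Suc m) = nxt m (B m)" for m by (simp_all add: B_def)
  have smB: "strict_mono B" using nxt by (intro strict_monoI_Suc) (simp add: BS)
  define bi where "bi i = (LEAST m. i < B (Suc m))" for i
  have biex: "\<exists>m. i < B (Suc m)" for i
  proof -
    have "Suc i \<le> B (Suc i)" using smB by (rule strict_mono_imp_increasing)
    then show ?thesis by (intro exI[of _ i]) simp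
  qed
  have bi1: "i < B (Suc (bi i))" for i unfolding bi_def using biex by (rule LeastI_ex)
  have bi2: "B (bi i) \<le> i" for i
  proof (cases "bi i")
    case 0 then show ?thesis by (simp add: B0)
  next
    case (Suc m)
    have "\<not> i < B (Suc m)" using Suc not_less_Least[of m "\<lambda>m. i < B (Suc m)"] by (simp add: bi_def)
    then show ?thesis using Suc by simp
  qed
  have biB: "bi i = m" if "B m \<le> i" "i < B (Suc m)" for i m
  proof -
    have "bi i \<le> m" unfolding bi_def using that(2) by (rule Least_le)
    moreover have "\<not> bi i < m"
    proof
      assume "bi i < m"
      then have "B (Suc (bi i)) \<le> B m" using smB by (simp add: strict_mono_less_eq)
      then show False using bi1[of i] that(1) by simp
    qed
    ultimately show ?thesis by simp
  qed
  have bimono: "m \<le> bi i" if "B m \<le> i" for i m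
  proof (rule ccontr)
    assume "\<not> m \<le> bi i"
    then have "B (Suc (bi i)) \<le> B m" using smB by (simp add: strict_mono_less_eq)
    then show False using bi1[of i] that by simp
  qed
  define z where "z i = sgn (c i) / real (Suc (bi i))" for i
  have z0: "z \<longlonglongrightarrow> 0"
  proof (rule LIMSEQ_I)
    fix r :: real assume r: "r > 0"
    obtain m0 where m0: "1 / real (Suc m0) < r"
      using reals_Archimedean[OF r] by (auto simp: inverse_eq_divide)
    have "norm (z i - 0) < r" if "i \<ge> B m0" for i
    proof -
      have "m0 \<le> bi i" using bimono that by simp
      then have "1 / real (Suc (bi i)) \<le> 1 / real (Suc m0)" by (simp add: frac_le)
      moreover have "\<bar>sgn (c i)\<bar> \<le> 1" by (simp add: abs_sgn_eq)
      ultimately have "\<bar>z i\<bar> \<le> 1 / real (Suc m0)"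
        unfolding z_def by (simp add: abs_mult divide_le_eq_1 frac_le)
      then show ?thesis using m0 by simp
    qed
    then show "\<exists>no. \<forall>i\<ge>no. norm (z i - 0) < r" by blast
  qed
  have cz: "c i * z i = \<bar>c i\<bar> / real (Suc (bi i))" for i
    unfolding z_def by (simp add: abs_sgn[of "c i"])
  have S: "summable (\<lambda>i. c i * z i)" using H[OF z0] .
  then obtain M where M: "\<forall>m\<ge>M. \<forall>n. norm (\<Sum>i\<in>{m..<n}. c i * z i) < 1"
    using S[unfolded summable_Cauchy, rule_format, of 1] by auto
  have "M \<le> B M" using smB by (rule strict_mono_imp_increasing)
  then have lt: "\<bar>\<Sum>i\<in>{B M..<B (Suc M)}. c i * z i\<bar> < 1" using M by auto
  have "(\<Sum>i\<in>{B M..<B (Suc M)}. c i * z i) = (\<Sum>i\<in>{B M..<B (Suc M)}. \<bar>c i\<bar> / real (Suc M))"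
    using biB by (intro sum.cong refl) (auto simp: cz)
  also have "\<dots> = (\<Sum>i\<in>{B M..<B (Suc M)}. \<bar>c i\<bar>) / real (Suc M)" by (simp add: sum_divide_distrib)
  also have "\<dots> \<ge> 1" using nxt[of "B M" M] by (simp add: BS)
  finally show False using lt by simp
qed

lemma reg_props:
  assumes "regular_matrix a"
  shows "summable (\<lambda>i. \<bar>a n i\<bar>)" "(\<lambda>n. a n i) \<longlonglongrightarrow> 0" "(\<lambda>n. \<Sum>i. a n i) \<longlonglongrightarrow> 1"
proof -
  show "summable (\<lambda>i. \<bar>a n i\<bar>)" using reg1(1)[OF assms] by (intro l1_of_null) blast
  have "(\<lambda>m. if m = i then 1 else 0 :: real) \<longlonglongrightarrow> 0"
    by (rule LIMSEQ_offset[where k="Suc i"]) simp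
  then have "(\<lambda>n. \<Sum>m. a n m * (if m = i then 1 else 0)) \<longlonglongrightarrow> 0" by (rule reg1(2)[OF assms])
  moreover have "(\<Sum>m. a n m * (if m = i then 1 else 0)) = a n i" for n
  proof -
    have "(\<lambda>m. a n m * (if m = i then 1 else 0)) = (\<lambda>m. if m = i then a n m else 0)" by auto
    then show ?thesis using sums_unique[OF sums_single[of i "a n"]] by simp
  qed
  ultimately show "(\<lambda>n. a n i) \<longlonglongrightarrow> 0" by simp
  have "(\<lambda>n. \<Sum>m. a n m * 1) \<longlonglongrightarrow> 1" by (rule reg1(2)[OF assms]) simp
  then show "(\<lambda>n. \<Sum>i. a n i) \<longlonglongrightarrow> 1" by simp
qed

lemma est:
  fixes a p :: "nat \<Rightarrow> real" and eta d :: real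
  assumes sa: "summable (\<lambda>i. \<bar>a i\<bar>)" and s1: "(\<Sum>i. \<bar>a i\<bar>) \<le> 1 + d"
    and s2: "\<bar>(\<Sum>i. a i) - 1\<bar> \<le> d" and s3: "(\<Sum>i<M. \<bar>a i\<bar>) \<le> d"
    and s4: "(\<Sum>i. \<bar>a (i + L)\<bar>) \<le> d" and hML: "M \<le> L"
    and p1: "\<And>i. \<bar>p i - eta\<bar> \<le> 1" and p2: "\<And>i. M \<le> i \<Longrightarrow> i < L \<Longrightarrow> \<bar>p i - eta\<bar> \<le> 2 * d"
    and eta: "\<bar>eta\<bar> \<le> 1" and d0: "0 \<le> d" and d1: "d \<le> 1"
  shows "summable (\<lambda>i. a i * p i) \<and> \<bar>(\<Sum>i. a i * p i) - eta\<bar> \<le> 7 * d"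
proof -
  have sa': "summable a" using sa by (rule summable_rabs_cancel)
  define q where "q i = a i * (p i - eta)" for i
  have qa: "\<bar>q i\<bar> \<le> \<bar>a i\<bar>" for i
  proof -
    have "\<bar>q i\<bar> = \<bar>a i\<bar> * \<bar>p i - eta\<bar>" by (simp add: q_def abs_mult)
    also have "\<dots> \<le> \<bar>a i\<bar> * 1" using p1[of i] by (intro mult_left_mono) auto
    finally show ?thesis by simp
  qed
  have sq: "summable (\<lambda>i. \<bar>q i\<bar>)" by (rule summable_comparison_test'[OF sa]) (simp add: qa)
  have sq': "summable q" using sq by (rule summable_rabs_cancel)
  have ap: "a i * p i = q i + eta * a i" for i by (simp add: q_def algebra_simps)
  have sap: "summable (\<lambda>i. a i * p i)" unfolding ap using sq' sa' by (intro summable_add summable_mult)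
  have sum_ap: "(\<Sum>i. a i * p i) = (\<Sum>i. q i) + eta * (\<Sum>i. a i)"
    unfolding ap using suminf_add[OF sq' summable_mult[OF sa', of eta]] suminf_mult[OF sa', of eta] by simp
  define w1 where "w1 i = (if i < M then \<bar>a i\<bar> else 0)" for i
  define w3 where "w3 i = (if L \<le> i then \<bar>a i\<bar> else 0)" for i
  have sw1: "summable w1" unfolding w1_def by (rule summable_comparison_test'[OF sa]) auto
  have sw3: "summable w3" unfolding w3_def by (rule summable_comparison_test'[OF sa]) auto
  have sw2: "summable (\<lambda>i. 2 * d * \<bar>a i\<bar>)" using sa by (rule summable_mult)
  have qw: "\<bar>q i\<bar> \<le> w1 i + 2 * d * \<bar>a i\<bar> + w3 i" for i
  proof -
    have nn: "0 \<le> 2 * d * \<bar>a i\<bar>" using d0 by simp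
    have w1p: "0 \<le> w1 i" and w3p: "0 \<le> w3 i" by (simp_all add: w1_def w3_def)
    consider "i < M" | "M \<le> i" "i < L" | "L \<le> i" by linarith
    then show ?thesis
    proof cases
      case 1
      then have "w1 i = \<bar>a i\<bar>" by (simp add: w1_def)
      then show ?thesis using qa[of i] nn w3p by linarith
    next
      case 2
      have "\<bar>q i\<bar> = \<bar>a i\<bar> * \<bar>p i - eta\<bar>" by (simp add: q_def abs_mult)
      also have "\<dots> \<le> \<bar>a i\<bar> * (2 * d)" using p2[OF 2] by (intro mult_left_mono) auto
      finally show ?thesis using 2 hML by (simp add: w1_def w3_def mult.commute)
    next
      case 3
      then have "w3 i = \<bar>a i\<bar>" by (simp add: w3_def)
      then show ?thesis using qa[of i] nn w1p by linarith
    qed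
  qed
  have "(\<Sum>i. \<bar>q i\<bar>) \<le> (\<Sum>i. w1 i + 2 * d * \<bar>a i\<bar> + w3 i)"
    using qw sq sw1 sw2 sw3 by (intro suminf_le summable_add) auto
  also have "\<dots> = (\<Sum>i. w1 i) + (\<Sum>i. 2 * d * \<bar>a i\<bar>) + (\<Sum>i. w3 i)"
    using suminf_add[OF summable_add[OF sw1 sw2] sw3] suminf_add[OF sw1 sw2] by simp
  also have "(\<Sum>i. w1 i) = (\<Sum>i<M. \<bar>a i\<bar>)"
    by (subst suminf_finite[of "{..<M}"]) (auto simp: w1_def)
  also have "(\<Sum>i. 2 * d * \<bar>a i\<bar>) = 2 * d * (\<Sum>i. \<bar>a i\<bar>)" using sa by (rule suminf_mult)
  also have "(\<Sum>i. w3 i) = (\<Sum>i. \<bar>a (i + L)\<bar>)"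
  proof -
    have "(\<Sum>i. w3 i) = (\<Sum>i. w3 (i + L)) + (\<Sum>i<L. w3 i)" using sw3 by (rule suminf_split_initial_segment)
    moreover have "(\<Sum>i<L. w3 i) = 0" by (simp add: w3_def)
    moreover have "(\<lambda>i. w3 (i + L)) = (\<lambda>i. \<bar>a (i + L)\<bar>)" by (simp add: w3_def)
    ultimately show ?thesis by simp
  qed
  finally have qb: "(\<Sum>i. \<bar>q i\<bar>) \<le> (\<Sum>i<M. \<bar>a i\<bar>) + 2 * d * (\<Sum>i. \<bar>a i\<bar>) + (\<Sum>i. \<bar>a (i + L)\<bar>)" .
  have "2 * d * (\<Sum>i. \<bar>a i\<bar>) \<le> 2 * d * (1 + d)" using s1 d0 by (intro mult_left_mono) auto
  also have "\<dots> \<le> 4 * d"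
  proof -
    have "d * d \<le> d * 1" using d0 d1 by (intro mult_left_mono) auto
    moreover have "2 * d * (1 + d) = 2 * d + 2 * (d * d)" by (simp add: algebra_simps)
    ultimately show ?thesis by linarith
  qed
  finally have "(\<Sum>i. \<bar>q i\<bar>) \<le> 6 * d" using qb s3 s4 by linarith
  then have Q: "\<bar>\<Sum>i. q i\<bar> \<le> 6 * d" using summable_rabs[OF sq] by linarith
  have E: "\<bar>eta * ((\<Sum>i. a i) - 1)\<bar> \<le> d"
  proof -
    have "\<bar>eta * ((\<Sum>i. a i) - 1)\<bar> = \<bar>eta\<bar> * \<bar>(\<Sum>i. a i) - 1\<bar>" by (simp add: abs_mult)
    also have "\<dots> \<le> 1 * d" using eta s2 by (intro mult_mono) auto
    finally show ?thesis by simp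
  qed
  have "(\<Sum>i. a i * p i) - eta = (\<Sum>i. q i) + eta * ((\<Sum>i. a i) - 1)" using sum_ap by (simp add: algebra_simps)
  then have "\<bar>(\<Sum>i. a i * p i) - eta\<bar> \<le> 7 * d" using Q E by linarith
  then show ?thesis using sap by simp
qed


lemma meager_subset:
  assumes "meager_in X S" "T \<subseteq> S"
  shows "meager_in X T"
proof -
  obtain F where F: "S \<subseteq> topspace X" "countable F" "\<forall>T\<in>F. nowhere_dense_in X T" "S \<subseteq> \<Union>F"
    using assms(1) unfolding meager_in_def by blast
  show ?thesis unfolding meager_in_def
    by (rule conjI, use F(1) assms(2) in blast, rule exI[of _ F]) (use F assms(2) in blast)
qed

lemma meager_UN:
  assumes K: "countable K" and m: "\<And>i. i \<in> K \<Longrightarrow> meager_in X (S i)"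
  shows "meager_in X (\<Union>i\<in>K. S i)"
proof -
  have ex: "\<exists>F. countable F \<and> (\<forall>T\<in>F. nowhere_dense_in X T) \<and> S i \<subseteq> \<Union>F" if "i \<in> K" for i
    using m[OF that] unfolding meager_in_def by (elim conjE)
  define F where "F i = (SOME F. countable F \<and> (\<forall>T\<in>F. nowhere_dense_in X T) \<and> S i \<subseteq> \<Union>F)" for i
  have F: "countable (F i) \<and> (\<forall>T\<in>F i. nowhere_dense_in X T) \<and> S i \<subseteq> \<Union>(F i)" if "i \<in> K" for i
    unfolding F_def using ex[OF that] by (rule someI_ex)
  have top: "S i \<subseteq> topspace X" if "i \<in> K" for i using m[OF that] unfolding meager_in_def by (elim conjE)
  show ?thesis unfolding meager_in_def
  proof (intro conjI exI[of _ "\<Union>i\<in>K. F i"])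
    show "(\<Union>i\<in>K. S i) \<subseteq> topspace X" using top by (simp add: UN_least)
    show "countable (\<Union>i\<in>K. F i)" using K F by (intro countable_UN) auto
    show "\<forall>T\<in>(\<Union>i\<in>K. F i). nowhere_dense_in X T" using F by auto
    show "(\<Union>i\<in>K. S i) \<subseteq> \<Union>(\<Union>i\<in>K. F i)"
    proof
      fix x assume "x \<in> (\<Union>i\<in>K. S i)"
      then obtain i where "i \<in> K" "x \<in> S i" by auto
      then obtain T where "T \<in> F i" "x \<in> T" using F[of i] by auto
      then show "x \<in> \<Union>(\<Union>i\<in>K. F i)" using \<open>i \<in> K\<close> by auto
    qed
  qed
qed

lemma meager_nd_seq:
  assumes "\<And>J::nat. nowhere_dense_in X (N J)"
  shows "meager_in X (\<Union>J. N J)"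
  unfolding meager_in_def
proof (intro conjI exI[of _ "range N"])
  show "(\<Union>J. N J) \<subseteq> topspace X"
  proof
    fix x assume "x \<in> (\<Union>J. N J)"
    then obtain J where "x \<in> N J" by auto
    then show "x \<in> topspace X" using assms[of J] by (auto simp: nowhere_dense_in_def)
  qed
  show "countable (range N)" by simp
  show "\<forall>T\<in>range N. nowhere_dense_in X T" using assms by auto
  show "(\<Union>J. N J) \<subseteq> \<Union>(range N)" by auto
qed

lemma nd_interval:
  assumes S: "S \<subseteq> {0<..1::real}"
    and H: "\<And>x0 r. x0 \<in> {0<..1} \<Longrightarrow> r > 0 \<Longrightarrow> \<exists>c d. c < d \<and> {c<..<d} \<subseteq> {0<..1} \<and> {c<..<d} \<subseteq> ball x0 r \<and> {c<..<d} \<inter> S = {}"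
  shows "nowhere_dense_in (top_of_set {0<..1}) S"
  unfolding nowhere_dense_in_def
proof (intro conjI)
  show "S \<subseteq> topspace (top_of_set {0<..1})" using S by simp
  show "top_of_set {0<..1} interior_of (top_of_set {0<..1} closure_of S) = {}"
  proof (rule ccontr)
    assume "top_of_set {0<..1} interior_of (top_of_set {0<..1} closure_of S) \<noteq> {}"
    then obtain y T where T: "openin (top_of_set {0<..1}) T" "y \<in> T" "T \<subseteq> top_of_set {0<..1} closure_of S"
      unfolding interior_of_def by blast
    obtain V where V: "open V" "T = {0<..1} \<inter> V" using T(1) by (auto simp: openin_open)
    have y: "y \<in> {0<..1}" "y \<in> V" using T(2) V(2) by auto
    obtain r where r: "r > 0" "ball y r \<subseteq> V" using V(1) y(2) open_contains_ball by blast
    obtain c d where cd: "c < d" "{c<..<d} \<subseteq> {0<..1}" "{c<..<d} \<subseteq> ball y r" "{c<..<d} \<inter> S = {}"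
      using H[OF y(1) r(1)] by blast
    define m where "m = (c + d) / 2"
    have m: "m \<in> {c<..<d}" using cd(1) by (simp add: m_def)
    then have "m \<in> T" using cd(2,3) r(2) V(2) by auto
    then have mc: "m \<in> top_of_set {0<..1} closure_of S" using T(3) by auto
    have "openin (top_of_set {0<..1}) {c<..<d}"
      unfolding openin_open using cd(2) by (intro exI[of _ "{c<..<d}"]) auto
    then obtain z where "z \<in> S" "z \<in> {c<..<d}" using mc m unfolding in_closure_of by blast
    then show False using cd(4) by blast
  qed
qed

lemma open_fun_nbhd:
  fixes V :: "('a \<Rightarrow> real) set"
  assumes "open V" "eta \<in> V"
  shows "\<exists>F e. finite F \<and> e > 0 \<and> (\<forall>g. (\<forall>s\<in>F. \<bar>g s - eta s\<bar> < e) \<longrightarrow> g \<in> V)"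
proof -
  obtain U where U: "finite {i \<in> UNIV. U i \<noteq> topspace euclidean}" "\<forall>i\<in>UNIV. openin euclidean (U i)"
      "eta \<in> Pi\<^sub>E UNIV U" "Pi\<^sub>E UNIV U \<subseteq> V"
    using assms unfolding open_fun_def openin_product_topology_alt by blast
  define F where "F = {i. U i \<noteq> UNIV}"
  have fF: "finite F" using U(1) by (simp add: F_def)
  have "\<forall>s\<in>F. \<exists>e>0. \<forall>y. \<bar>y - eta s\<bar> < e \<longrightarrow> y \<in> U s"
  proof
    fix s assume "s \<in> F"
    have "open (U s)" using U(2) by simp
    moreover have "eta s \<in> U s" using U(3) by (auto simp: PiE_UNIV_domain)
    ultimately obtain e where "e > 0" "ball (eta s) e \<subseteq> U s" using open_contains_ball by blast
    then show "\<exists>e>0. \<forall>y. \<bar>y - eta s\<bar> < e \<longrightarrow> y \<in> U s"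
      by (intro exI[of _ e]) (auto simp: dist_real_def abs_minus_commute)
  qed
  then obtain E where E: "\<forall>s\<in>F. E s > 0 \<and> (\<forall>y. \<bar>y - eta s\<bar> < E s \<longrightarrow> y \<in> U s)"
    by (rule bchoice[elim_format]) blast
  define e where "e = Min (insert 1 (E ` F))"
  have e0: "e > 0" unfolding e_def using fF E by (subst Min_gr_iff) auto
  have eE: "e \<le> E s" if "s \<in> F" for s unfolding e_def using fF that by (intro Min_le) auto
  have "g \<in> V" if g: "\<forall>s\<in>F. \<bar>g s - eta s\<bar> < e" for g
  proof -
    have "g s \<in> U s" for s
    proof (cases "s \<in> F")
      case True
      have "\<bar>g s - eta s\<bar> < E s" using g True eE[OF True] by fastforce
      then show ?thesis using E True by blast
    next
      case False then show ?thesis by (simp add: F_def)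
    qed
    then have "g \<in> Pi\<^sub>E UNIV U" by (simp add: PiE_UNIV_domain)
    then show ?thesis using U(4) by blast
  qed
  then show ?thesis using fF e0 by blast
qed

lemma cluster_cont:
  fixes f :: "nat \<Rightarrow> 'a::topological_space" and phi :: "'a \<Rightarrow> real"
  assumes I: "is_ideal I" and c: "I_cluster I f eta" and phi: "continuous_on UNIV phi"
    and lim: "(\<lambda>n. phi (f n)) \<longlonglongrightarrow> L"
  shows "phi eta = L"
proof (rule ccontr)
  assume ne: "phi eta \<noteq> L"
  define r where "r = \<bar>phi eta - L\<bar> / 2"
  have r: "r > 0" using ne by (simp add: r_def)
  define U where "U = phi -` ball (phi eta) r"
  have oU: "open U"
  proof -
    have "\<forall>B. open B \<longrightarrow> open (phi -` B \<inter> UNIV)" using continuous_on_open_vimage[OF open_UNIV, of phi] phi by simp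
    then have "open (phi -` ball (phi eta) r \<inter> UNIV)" by simp
    then show ?thesis by (simp add: U_def)
  qed
  have eU: "eta \<in> U" using r by (simp add: U_def)
  have nI: "{n. f n \<in> U} \<notin> I" using c oU eU unfolding I_cluster_def by blast
  obtain N where N: "\<forall>n\<ge>N. dist (phi (f n)) L < r" using lim r unfolding lim_sequentially by blast
  have "{n. f n \<in> U} \<subseteq> {..<N}"
  proof
    fix n assume n: "n \<in> {n. f n \<in> U}"
    show "n \<in> {..<N}"
    proof (rule ccontr)
      assume "n \<notin> {..<N}"
      then have "dist (phi (f n)) L < r" using N by auto
      moreover have "dist (phi (f n)) (phi eta) < r" using n by (simp add: U_def dist_commute)
      moreover have "dist (phi eta) L \<le> dist (phi eta) (phi (f n)) + dist (phi (f n)) L"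
        by (rule dist_triangle)
      moreover have "dist (phi eta) (phi (f n)) = dist (phi (f n)) (phi eta)" by (rule dist_commute)
      moreover have "dist (phi eta) L = 2 * r" by (simp add: r_def dist_real_def)
      ultimately show False by linarith
    qed
  qed
  moreover have "{..<N} \<in> I" using I unfolding is_ideal_def by (elim conjE) simp
  ultimately have "{n. f n \<in> U} \<in> I" using I unfolding is_ideal_def by (elim conjE) blast
  then show False using nI by simp
qed


definition dig :: "nat \<Rightarrow> real \<Rightarrow> nat \<Rightarrow> nat" where
  "dig b x p = digit b (Suc p) x"

lemma dig_less: "b \<ge> 2 \<Longrightarrow> x \<in> {0<..1} \<Longrightarrow> dig b x p < b"
  unfolding dig_def by (rule digit_less)

lemma freq_cnt:
  assumes "length s = k"
  shows "freq b s n x = real (cnt (dig b x) k s 0 n) / real n"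
proof -
  have "{i\<in>{1..n}. \<forall>j<length s. digit b (i + j) x = s ! j} = Suc ` {p\<in>{0..<0+n}. blk (dig b x) k p = s}"
  proof (rule set_eqI, rule iffI)
    fix i assume i: "i \<in> {i\<in>{1..n}. \<forall>j<length s. digit b (i + j) x = s ! j}"
    then have "i - 1 \<in> {p\<in>{0..<0+n}. blk (dig b x) k p = s}"
      using assms by (auto simp: dig_def intro!: nth_equalityI)
    moreover have "i = Suc (i - 1)" using i by auto
    ultimately show "i \<in> Suc ` {p\<in>{0..<0+n}. blk (dig b x) k p = s}" by blast
  next
    fix i assume "i \<in> Suc ` {p\<in>{0..<0+n}. blk (dig b x) k p = s}"
    then obtain p where p: "i = Suc p" "p < n" "blk (dig b x) k p = s" by auto
    have "digit b (i + j) x = s ! j" if "j < length s" for j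
    proof -
      have "s ! j = blk (dig b x) k p ! j" using p by simp
      also have "\<dots> = dig b x (p + j)" using that assms by simp
      finally show ?thesis using p by (simp add: dig_def)
    qed
    then show "i \<in> {i\<in>{1..n}. \<forall>j<length s. digit b (i + j) x = s ! j}" using p by auto
  qed
  then have "card {i\<in>{1..n}. \<forall>j<length s. digit b (i + j) x = s ! j} = cnt (dig b x) k s 0 n"
    unfolding cnt_def by (simp add: card_image)
  then show ?thesis unfolding freq_def by simp
qed

lemma freq_bounds: "length s = k \<Longrightarrow> 0 \<le> freq b s n x \<and> freq b s n x \<le> 1"
proof -
  assume "length s = k"
  then have "freq b s n x = real (cnt (dig b x) k s 0 n) / real n" by (rule freq_cnt)
  moreover have "cnt (dig b x) k s 0 n \<le> n" by (rule cnt_le)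
  ultimately show ?thesis by (cases "n = 0") (auto simp: divide_le_eq_1)
qed

lemma sum_freq:
  assumes "b \<ge> 2" "x \<in> {0<..1}" "n > 0"
  shows "(\<Sum>s\<in>strings b k. freq b s n x) = 1"
proof -
  have "(\<Sum>s\<in>strings b k. freq b s n x) = (\<Sum>s\<in>strings b k. real (cnt (dig b x) k s 0 n) / real n)"
    by (intro sum.cong refl) (auto simp: strings_def freq_cnt)
  also have "\<dots> = real (\<Sum>s\<in>strings b k. cnt (dig b x) k s 0 n) / real n"
    by (simp add: sum_divide_distrib)
  also have "(\<Sum>s\<in>strings b k. cnt (dig b x) k s 0 n) = n"
    using dig_less[OF assms(1,2)] by (rule sum_cnt_strings)
  finally show ?thesis using assms(3) by simp
qed

lemma freq_shift:
  assumes "b \<ge> 2" "x \<in> {0<..1}" "n > 0" "v \<in> strings b k"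
  shows "\<bar>(\<Sum>c<b. freq b (c # v) n x) - (\<Sum>c<b. freq b (v @ [c]) n x)\<bar> \<le> 1 / real n"
proof -
  have lv: "length v = k" using assms(4) by (simp add: strings_def)
  have db: "\<And>q. dig b x q < b" using dig_less[OF assms(1,2)] .
  have "(\<Sum>c<b. freq b (c # v) n x) = (\<Sum>c<b. real (cnt (dig b x) (Suc k) (c # v) 0 n)) / real n"
    using lv by (simp add: freq_cnt sum_divide_distrib)
  also have "(\<Sum>c<b. real (cnt (dig b x) (Suc k) (c # v) 0 n)) = real (cnt (dig b x) k v (Suc 0) n)"
    using fib1[of "dig b x" b k v 0 n, OF db] by (metis of_nat_sum)
  finally have A: "(\<Sum>c<b. freq b (c # v) n x) = real (cnt (dig b x) k v (Suc 0) n) / real n" .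
  have "(\<Sum>c<b. freq b (v @ [c]) n x) = (\<Sum>c<b. real (cnt (dig b x) (Suc k) (v @ [c]) 0 n)) / real n"
    using lv by (simp add: freq_cnt sum_divide_distrib)
  also have "(\<Sum>c<b. real (cnt (dig b x) (Suc k) (v @ [c]) 0 n)) = real (cnt (dig b x) k v 0 n)"
    using fib2[of "dig b x" b k v 0 n, OF db] by (metis of_nat_sum)
  finally have B: "(\<Sum>c<b. freq b (v @ [c]) n x) = real (cnt (dig b x) k v 0 n) / real n" .
  have "\<bar>real (cnt (dig b x) k v (Suc 0) n) - real (cnt (dig b x) k v 0 n)\<bar> \<le> 1" by (rule cnt_Suc_diff)
  then have "\<bar>real (cnt (dig b x) k v (Suc 0) n) / real n - real (cnt (dig b x) k v 0 n) / real n\<bar> \<le> 1 / real n"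
    using assms(3) by (simp add: diff_divide_distrib[symmetric] abs_div divide_right_mono)
  then show ?thesis using A B by simp
qed

lemma summ_bdd:
  fixes c z :: "nat \<Rightarrow> real"
  assumes "summable (\<lambda>i. \<bar>c i\<bar>)" "\<And>i. \<bar>z i\<bar> \<le> C"
  shows "summable (\<lambda>i. c i * z i)"
proof (rule summable_comparison_test'[where N=0])
  show "summable (\<lambda>i. C * \<bar>c i\<bar>)" using assms(1) by (rule summable_mult)
  show "norm (c i * z i) \<le> C * \<bar>c i\<bar>" for i
    using mult_left_mono[OF assms(2)[of i] abs_ge_zero[of "c i"]] by (simp add: abs_mult mult.commute)
qed

lemma mat_freq_in: "s \<in> strings b k \<Longrightarrow> mat_freq a b k x n s = (\<Sum>i. a n i * freq b s (Suc i) x)"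
  by (simp add: mat_freq_def)

lemma mat_freq_out: "s \<notin> strings b k \<Longrightarrow> mat_freq a b k x n s = 0"
  by (simp add: mat_freq_def)

lemma freq_abs: "\<bar>freq b s n x\<bar> \<le> 1"
  using freq_bounds[of s "length s" b n x] by simp

lemma sum_abs_le_card:
  fixes g :: "nat \<Rightarrow> real"
  assumes "\<And>c. \<bar>g c\<bar> \<le> 1"
  shows "\<bar>\<Sum>c<b. g c\<bar> \<le> real b"
proof -
  have "\<bar>\<Sum>c<b. g c\<bar> \<le> (\<Sum>c<b. \<bar>g c\<bar>)" by (rule sum_abs)
  also have "\<dots> \<le> (\<Sum>c<b. 1)" by (intro sum_mono assms)
  finally show ?thesis by simp
qed

lemma Gamma_sub:
  assumes b: "b \<ge> 2" and x: "x \<in> {0<..1}" and I: "is_ideal I" and reg: "regular_matrix a"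
    and ab: "(\<lambda>n. \<Sum>i. \<bar>a n i\<bar>) \<longlonglongrightarrow> 1"
  shows "Gamma b (Suc k) x I a \<subseteq> Delta b (Suc k)"
proof
  fix eta assume "eta \<in> Gamma b (Suc k) x I a"
  then have cl: "I_cluster I (mat_freq a b (Suc k) x) eta" by (simp add: Gamma_def)
  define f where "f = mat_freq a b (Suc k) x"
  have sr: "\<And>n. summable (\<lambda>i. \<bar>a n i\<bar>)" using reg_props(1)[OF reg] .
  have sa: "\<And>n. summable (\<lambda>i. a n i)" using sr by (rule summable_rabs_cancel)
  have sm: "\<And>n s. summable (\<lambda>i. a n i * freq b s (Suc i) x)"
    using sr freq_abs by (rule summ_bdd)
  have cont_proj: "\<And>s. continuous_on UNIV (\<lambda>g::nat list \<Rightarrow> real. g s)" by simp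
  have A: "eta s = 0" if s: "s \<notin> strings b (Suc k)" for s
  proof -
    have "(\<lambda>n. f n s) \<longlonglongrightarrow> 0" using s by (simp add: f_def mat_freq_out)
    then show ?thesis using cluster_cont[OF I cl[folded f_def] cont_proj] by blast
  qed
  have B: "(\<Sum>s\<in>strings b (Suc k). eta s) = 1"
  proof -
    have "(\<lambda>n. (\<Sum>s\<in>strings b (Suc k). f n s)) \<longlonglongrightarrow> 1"
    proof -
      have "(\<Sum>s\<in>strings b (Suc k). f n s) = (\<Sum>i. a n i)" for n
      proof -
        have "(\<Sum>s\<in>strings b (Suc k). f n s) = (\<Sum>s\<in>strings b (Suc k). \<Sum>i. a n i * freq b s (Suc i) x)"
          by (simp add: f_def mat_freq_in)
        also have "\<dots> = (\<Sum>i. \<Sum>s\<in>strings b (Suc k). a n i * freq b s (Suc i) x)"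
          using sm by (intro suminf_sum[symmetric])
        also have "\<dots> = (\<Sum>i. a n i)"
          using sum_freq[OF b x] by (simp add: sum_distrib_left[symmetric])
        finally show ?thesis .
      qed
      then show ?thesis using reg_props(3)[OF reg] by simp
    qed
    moreover have "continuous_on UNIV (\<lambda>g::nat list \<Rightarrow> real. \<Sum>s\<in>strings b (Suc k). g s)"
      by (intro continuous_intros) simp
    ultimately show ?thesis using cluster_cont[OF I cl[folded f_def]] by blast
  qed
  have C: "eta s \<ge> 0" if s: "s \<in> strings b (Suc k)" for s
  proof -
    define neg where "neg n = (\<Sum>i. \<bar>a n i\<bar> - a n i)" for n
    have neg_eq: "neg n = (\<Sum>i. \<bar>a n i\<bar>) - (\<Sum>i. a n i)" for n
      unfolding neg_def using suminf_diff[OF sr sa] by simp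
    have negl: "neg \<longlonglongrightarrow> 0"
      unfolding neg_eq using tendsto_diff[OF ab reg_props(3)[OF reg]] by simp
    have snn: "summable (\<lambda>i. \<bar>a n i\<bar> - a n i)" for n using sr sa by (rule summable_diff)
    have negnn: "0 \<le> neg n" for n unfolding neg_def by (rule suminf_nonneg[OF snn]) simp
    have low: "- neg n \<le> f n s" for n
    proof -
      have sn: "summable (\<lambda>i. \<bar>a n i\<bar> - a n i)" using sr sa by (rule summable_diff)
      have "(\<Sum>i. - (\<bar>a n i\<bar> - a n i)) \<le> (\<Sum>i. a n i * freq b s (Suc i) x)"
      proof (rule suminf_le)
        show "- (\<bar>a n i\<bar> - a n i) \<le> a n i * freq b s (Suc i) x" for i
        proof -
          have fb: "0 \<le> freq b s (Suc i) x" "freq b s (Suc i) x \<le> 1" using freq_bounds[of s "length s" b "Suc i" x] by auto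
          show ?thesis
          proof (cases "a n i \<ge> 0")
            case True then show ?thesis using fb by simp
          next
            case False
            then have "a n i * freq b s (Suc i) x \<ge> a n i * 1" using fb by (intro mult_left_mono_neg) auto
            then show ?thesis using False by simp
          qed
        qed
        show "summable (\<lambda>i. - (\<bar>a n i\<bar> - a n i))" using sn by (rule summable_minus)
        show "summable (\<lambda>i. a n i * freq b s (Suc i) x)" by (rule sm)
      qed
      moreover have "(\<Sum>i. - (\<bar>a n i\<bar> - a n i)) = - neg n" unfolding neg_def using sn by (rule suminf_minus)
      ultimately show ?thesis using s by (simp add: f_def mat_freq_in)
    qed
    have "(\<lambda>n. min (f n s) 0) \<longlonglongrightarrow> 0"
    proof (rule real_tendsto_sandwich[where f="\<lambda>n. - neg n" and h="\<lambda>n. 0"])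
      show "\<forall>\<^sub>F n in sequentially. - neg n \<le> min (f n s) 0"
        using low negnn by (intro always_eventually) auto
      show "\<forall>\<^sub>F n in sequentially. min (f n s) 0 \<le> 0" by simp
      show "(\<lambda>n. - neg n) \<longlonglongrightarrow> 0" using tendsto_minus[OF negl] by simp
    qed simp
    moreover have "continuous_on UNIV (\<lambda>g::nat list \<Rightarrow> real. min (g s) 0)"
      by (intro continuous_intros) simp
    ultimately have "min (eta s) 0 = 0" using cluster_cont[OF I cl[folded f_def]] by blast
    then show ?thesis by linarith
  qed
  have D: "(\<Sum>c<b. eta (c # v)) = (\<Sum>c<b. eta (v @ [c]))" if v: "v \<in> strings b k" for v
  proof -
    define D where "D i = (\<Sum>c<b. freq b (c # v) (Suc i) x) - (\<Sum>c<b. freq b (v @ [c]) (Suc i) x)" for i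
    have Dl: "D \<longlonglongrightarrow> 0"
    proof (rule Lim_null_comparison[where g="\<lambda>i. 1 / real (Suc i)"])
      show "\<forall>\<^sub>F i in sequentially. norm (D i) \<le> 1 / real (Suc i)"
      proof (intro always_eventually allI)
        fix i
        have "\<bar>D i\<bar> \<le> 1 / real (Suc i)" unfolding D_def by (rule freq_shift[OF b x _ v]) simp
        then show "norm (D i) \<le> 1 / real (Suc i)" by simp
      qed
      show "(\<lambda>i. 1 / real (Suc i)) \<longlonglongrightarrow> 0" by (rule LIMSEQ_Suc[OF lim_const_over_n])
    qed
    have cv: "c # v \<in> strings b (Suc k)" "v @ [c] \<in> strings b (Suc k)" if "c < b" for c
      using v that by (auto simp: strings_def)
    have eq: "(\<Sum>c<b. f n (c # v)) - (\<Sum>c<b. f n (v @ [c])) = (\<Sum>i. a n i * D i)" for n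
    proof -
      have "(\<Sum>c<b. f n (c # v)) = (\<Sum>c<b. \<Sum>i. a n i * freq b (c # v) (Suc i) x)"
        using cv by (simp add: f_def mat_freq_in)
      also have "\<dots> = (\<Sum>i. \<Sum>c<b. a n i * freq b (c # v) (Suc i) x)"
        using sm by (intro suminf_sum[symmetric])
      finally have E1: "(\<Sum>c<b. f n (c # v)) = (\<Sum>i. a n i * (\<Sum>c<b. freq b (c # v) (Suc i) x))"
        by (simp add: sum_distrib_left)
      have "(\<Sum>c<b. f n (v @ [c])) = (\<Sum>c<b. \<Sum>i. a n i * freq b (v @ [c]) (Suc i) x)"
        using cv by (simp add: f_def mat_freq_in)
      also have "\<dots> = (\<Sum>i. \<Sum>c<b. a n i * freq b (v @ [c]) (Suc i) x)"
        using sm by (intro suminf_sum[symmetric])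
      finally have E2: "(\<Sum>c<b. f n (v @ [c])) = (\<Sum>i. a n i * (\<Sum>c<b. freq b (v @ [c]) (Suc i) x))"
        by (simp add: sum_distrib_left)
      have s1: "summable (\<lambda>i. a n i * (\<Sum>c<b. freq b (c # v) (Suc i) x))"
        using sr[of n] by (rule summ_bdd[where C="real b"]) (intro sum_abs_le_card freq_abs)
      have s2: "summable (\<lambda>i. a n i * (\<Sum>c<b. freq b (v @ [c]) (Suc i) x))"
        using sr[of n] by (rule summ_bdd[where C="real b"]) (intro sum_abs_le_card freq_abs)
      show ?thesis unfolding E1 E2 D_def using suminf_diff[OF s1 s2] by (simp add: right_diff_distrib)
    qed
    have "(\<lambda>n. (\<Sum>c<b. f n (c # v)) - (\<Sum>c<b. f n (v @ [c]))) \<longlonglongrightarrow> 0"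
      unfolding eq using reg1(2)[OF reg Dl] .
    moreover have "continuous_on UNIV (\<lambda>g::nat list \<Rightarrow> real. (\<Sum>c<b. g (c # v)) - (\<Sum>c<b. g (v @ [c])))"
      by (intro continuous_intros) simp_all
    ultimately have "(\<Sum>c<b. eta (c # v)) - (\<Sum>c<b. eta (v @ [c])) = 0"
      using cluster_cont[OF I cl[folded f_def]] by blast
    then show ?thesis by simp
  qed
  show "eta \<in> Delta b (Suc k)" unfolding Delta_def using A B C D by auto
qed

lemma Delta_bounds:
  assumes "eta \<in> Delta b k"
  shows "\<And>s. s \<notin> strings b k \<Longrightarrow> eta s = 0" "\<And>s. s \<in> strings b k \<Longrightarrow> 0 \<le> eta s \<and> eta s \<le> 1"
proof -
  show "\<And>s. s \<notin> strings b k \<Longrightarrow> eta s = 0" using assms by (simp add: Delta_def)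
  have nn: "\<forall>s\<in>strings b k. eta s \<ge> 0" and s1: "(\<Sum>s\<in>strings b k. eta s) = 1"
    using assms by (auto simp: Delta_def)
  fix s assume s: "s \<in> strings b k"
  have "eta s \<le> (\<Sum>s\<in>strings b k. eta s)"
    using s nn finite_strings by (intro member_le_sum) auto
  then show "0 \<le> eta s \<and> eta s \<le> 1" using s1 nn s by auto
qed

lemma density:
  assumes b: "b \<ge> 2" and reg: "regular_matrix a" and ab: "(\<lambda>n. \<Sum>i. \<bar>a n i\<bar>) \<longlonglongrightarrow> 1"
    and eta: "eta \<in> Delta b (Suc k)" and V: "open V" "eta \<in> V" and t: "strict_mono t"
    and x0: "x0 \<in> {0<..1}" and r: "r > 0"
  shows "\<exists>c d. c < d \<and> {c<..<d} \<subseteq> {0<..1} \<and> {c<..<d} \<subseteq> ball x0 r \<and>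
     (\<forall>x\<in>{c<..<d}. \<exists>j\<ge>J. \<forall>n\<in>{t j..<t (Suc j)}. mat_freq a b (Suc k) x n \<in> V)"
proof -
  obtain F eps where F: "finite F" "eps > 0" "\<forall>g. (\<forall>s\<in>F. \<bar>g s - eta s\<bar> < eps) \<longrightarrow> g \<in> V"
    using open_fun_nbhd[OF V] by blast
  define d where "d = min (eps / 8) 1"
  have d0: "d > 0" and d1: "d \<le> 1" and d7: "7 * d < eps" using F(2) by (auto simp: d_def)
  have eout: "\<And>s. s \<notin> strings b (Suc k) \<Longrightarrow> eta s = 0"
    and eb: "\<And>s. s \<in> strings b (Suc k) \<Longrightarrow> 0 \<le> eta s \<and> eta s \<le> 1"
    using Delta_bounds[OF eta] by auto
  obtain f K where fK: "\<forall>q. f q < b"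
      "\<forall>n\<ge>K. \<forall>s\<in>strings b (Suc k). \<bar>real (cnt f (Suc k) s 0 n) - real n * eta s\<bar> \<le> d * real n"
    using approx_seq[OF eta d0] by blast
  obtain N0 where N0': "(1 / real b) ^ N0 < r" using real_arch_pow_inv[OF r, of "1 / real b"] b by auto
  have N0: "1 / real b ^ N0 < r" using N0' by (simp add: power_one_over)
  define e where "e q = (if q < N0 then digit b (Suc q) x0 else f (q - N0))" for q
  have eb': "\<forall>q. e q < b" using fK(1) digit_less[OF b x0] by (simp add: e_def)
  have ef: "(\<lambda>q. e (q + N0)) = f" by (simp add: e_def)
  define M where "M = N0 + K + nat \<lceil>real N0 / d\<rceil>"
  have cntM: "\<bar>real (cnt e (Suc k) s 0 m) - real m * eta s\<bar> \<le> 2 * d * real m"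
    if m: "m \<ge> M" and s: "s \<in> strings b (Suc k)" for m s
  proof -
    have mN: "m = N0 + (m - N0)" using m by (simp add: M_def)
    have "cnt e (Suc k) s 0 m = cnt e (Suc k) s 0 N0 + cnt e (Suc k) s (0 + N0) (m - N0)"
      using cnt_add[of e "Suc k" s 0 N0 "m - N0"] mN by simp
    also have "cnt e (Suc k) s (0 + N0) (m - N0) = cnt f (Suc k) s 0 (m - N0)"
      using cnt_shift[of e "Suc k" s 0 N0 "m - N0"] ef by simp
    finally have ce: "cnt e (Suc k) s 0 m = cnt e (Suc k) s 0 N0 + cnt f (Suc k) s 0 (m - N0)" .
    have A: "\<bar>real (cnt f (Suc k) s 0 (m - N0)) - real (m - N0) * eta s\<bar> \<le> d * real (m - N0)"
    proof -
      have "m - N0 \<ge> K" using m by (simp add: M_def)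
      then show ?thesis using fK(2) s by blast
    qed
    have B: "real (cnt e (Suc k) s 0 N0) \<le> real N0" using cnt_le[of e "Suc k" s 0 N0] by simp
    have B2: "0 \<le> real N0 * eta s" "real N0 * eta s \<le> real N0" using eb[OF s] by (auto simp: mult_left_le)
    have rm: "real m = real N0 + real (m - N0)" using mN by (metis of_nat_add)
    define X where "X = real (cnt e (Suc k) s 0 N0) - real N0 * eta s"
    define Y where "Y = real (cnt f (Suc k) s 0 (m - N0)) - real (m - N0) * eta s"
    have ce': "real (cnt e (Suc k) s 0 m) = real (cnt e (Suc k) s 0 N0) + real (cnt f (Suc k) s 0 (m - N0))"
      using ce by simp
    have me: "real m * eta s = real N0 * eta s + real (m - N0) * eta s" unfolding rm by (rule distrib_right)
    have XY: "real (cnt e (Suc k) s 0 m) - real m * eta s = X + Y" unfolding X_def Y_def ce' me by simp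
    have X: "\<bar>X\<bar> \<le> real N0" unfolding X_def abs_le_iff using B B2 by simp
    have "\<bar>real (cnt e (Suc k) s 0 m) - real m * eta s\<bar> \<le> real N0 + d * real (m - N0)"
      unfolding XY using abs_triangle_ineq[of X Y] X A[folded Y_def] by linarith
    also have "d * real (m - N0) \<le> d * real m" using d0 by (intro mult_left_mono) auto
    also have "real N0 \<le> d * real m"
    proof -
      have "real N0 / d \<le> real m" using m unfolding M_def by linarith
      then show ?thesis using d0 by (simp add: divide_le_eq mult.commute)
    qed
    finally show ?thesis by simp
  qed
  have sr: "\<And>n. summable (\<lambda>i. \<bar>a n i\<bar>)" using reg_props(1)[OF reg] .
  have ev1: "\<forall>\<^sub>F n in sequentially. dist (\<Sum>i. \<bar>a n i\<bar>) 1 < d" using tendstoD[OF ab d0] .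
  have ev2: "\<forall>\<^sub>F n in sequentially. dist (\<Sum>i. a n i) 1 < d" using tendstoD[OF reg_props(3)[OF reg] d0] .
  have "(\<lambda>n. \<Sum>i<M. \<bar>a n i\<bar>) \<longlonglongrightarrow> (\<Sum>i<M. 0)"
    by (intro tendsto_sum tendsto_rabs_zero reg_props(2)[OF reg])
  then have lim3: "(\<lambda>n. \<Sum>i<M. \<bar>a n i\<bar>) \<longlonglongrightarrow> 0" by simp
  have ev3: "\<forall>\<^sub>F n in sequentially. dist (\<Sum>i<M. \<bar>a n i\<bar>) 0 < d" using tendstoD[OF lim3 d0] .
  obtain N1 where N1: "\<And>n. n \<ge> N1 \<Longrightarrow> dist (\<Sum>i. \<bar>a n i\<bar>) 1 < d \<and> dist (\<Sum>i. a n i) 1 < d \<and> dist (\<Sum>i<M. \<bar>a n i\<bar>) 0 < d"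
    using eventually_conj[OF ev1 eventually_conj[OF ev2 ev3]] unfolding eventually_sequentially by blast
  define j where "j = J + N1"
  have tj: "t j \<ge> N1" using strict_mono_imp_increasing[OF t, of j] by (simp add: j_def)
  define S where "S = {t j..<t (Suc j)}"
  define Lf where "Lf n = (SOME Ln. \<forall>L'\<ge>Ln. norm (\<Sum>i. \<bar>a n (i + L')\<bar>) < d)" for n
  have Lf: "\<forall>L'\<ge>Lf n. norm (\<Sum>i. \<bar>a n (i + L')\<bar>) < d" for n
    unfolding Lf_def by (rule someI_ex) (rule suminf_exist_split[OF d0 sr])
  define L where "L = M + (\<Sum>n\<in>S. Lf n)"
  have LLf: "Lf n \<le> L" if "n \<in> S" for n
  proof -
    have "Lf n \<le> (\<Sum>n\<in>S. Lf n)" using that by (intro member_le_sum) (auto simp: S_def)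
    then show ?thesis by (simp add: L_def)
  qed
  have hML: "M \<le> L" by (simp add: L_def)
  define N where "N = L + Suc k"
  have N0N: "N0 \<le> N" by (simp add: N_def L_def M_def)
  have pre: "\<forall>q<N0. e q = digit b (Suc q) x0" by (simp add: e_def)
  obtain c dd where cd: "c < dd" "{c<..<dd} \<subseteq> {0<..1}" "{c<..<dd} \<subseteq> ball x0 r"
      "\<forall>x\<in>{c<..<dd}. \<forall>q<N. digit b (Suc q) x = e q"
    using cyl_interval[OF b x0 eb' pre N0N N0] by blast
  have main: "mat_freq a b (Suc k) x n \<in> V" if x: "x \<in> {c<..<dd}" and n: "n \<in> S" for x n
  proof -
    have nN1: "n \<ge> N1" using n tj by (simp add: S_def)
    note Nn = N1[OF nN1]
    have dx: "dig b x q = e q" if "q < N" for q using cd(4) x that by (simp add: dig_def)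
    have close: "\<bar>mat_freq a b (Suc k) x n s - eta s\<bar> < eps" for s
    proof (cases "s \<in> strings b (Suc k)")
      case False
      then show ?thesis using eout F(2) by (simp add: mat_freq_out)
    next
      case True
      have ls: "length s = Suc k" using True by (simp add: strings_def)
      have p2: "\<bar>freq b s (Suc i) x - eta s\<bar> \<le> 2 * d" if i: "M \<le> i" "i < L" for i
      proof -
        have "cnt (dig b x) (Suc k) s 0 (Suc i) = cnt e (Suc k) s 0 (Suc i)"
          by (rule cnt_cong) (use i dx in \<open>auto simp: N_def\<close>)
        then have fr: "freq b s (Suc i) x = real (cnt e (Suc k) s 0 (Suc i)) / real (Suc i)"
          using freq_cnt[OF ls] by simp
        have c2: "\<bar>real (cnt e (Suc k) s 0 (Suc i)) - real (Suc i) * eta s\<bar> \<le> 2 * d * real (Suc i)"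
          by (rule cntM) (use i True in auto)
        have "freq b s (Suc i) x - eta s = (real (cnt e (Suc k) s 0 (Suc i)) - real (Suc i) * eta s) / real (Suc i)"
          unfolding fr by (simp add: field_simps)
        then have "\<bar>freq b s (Suc i) x - eta s\<bar> = \<bar>real (cnt e (Suc k) s 0 (Suc i)) - real (Suc i) * eta s\<bar> / real (Suc i)"
          by simp
        also have "\<dots> \<le> 2 * d" using c2 by (simp add: divide_le_eq)
        finally show ?thesis .
      qed
      have p1: "\<bar>freq b s (Suc i) x - eta s\<bar> \<le> 1" for i
        using freq_bounds[OF ls, of b "Suc i" x] eb[OF True] by linarith
      have "\<bar>(\<Sum>i. \<bar>a n i\<bar>) - 1\<bar> < d" using Nn by (simp add: dist_real_def)
      then have s1: "(\<Sum>i. \<bar>a n i\<bar>) \<le> 1 + d" by linarith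
      have s2: "\<bar>(\<Sum>i. a n i) - 1\<bar> \<le> d" using Nn by (simp add: dist_real_def)
      have s3: "(\<Sum>i<M. \<bar>a n i\<bar>) \<le> d" using Nn by (simp add: dist_real_def)
      have "norm (\<Sum>i. \<bar>a n (i + L)\<bar>) < d" using Lf[of n] LLf[OF n] by blast
      then have s4: "(\<Sum>i. \<bar>a n (i + L)\<bar>) \<le> d" by simp
      have "\<bar>(\<Sum>i. a n i * freq b s (Suc i) x) - eta s\<bar> \<le> 7 * d"
      proof -
        have ea: "\<bar>eta s\<bar> \<le> 1" using eb[OF True] by simp
        have d0': "0 \<le> d" using d0 by simp
        show ?thesis using est[OF sr s1 s2 s3 s4 hML p1 p2 ea d0' d1] by (rule conjunct2)
      qed
      then show ?thesis using d7 True by (simp add: mat_freq_in)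
    qed
    then show ?thesis using F(3) by blast
  qed
  have jJ: "j \<ge> J" by (simp add: j_def)
  have all: "\<forall>x\<in>{c<..<dd}. \<exists>j\<ge>J. \<forall>n\<in>{t j..<t (Suc j)}. mat_freq a b (Suc k) x n \<in> V"
  proof
    fix x assume "x \<in> {c<..<dd}"
    then have "\<forall>n\<in>{t j..<t (Suc j)}. mat_freq a b (Suc k) x n \<in> V" using main by (simp add: S_def)
    then show "\<exists>j\<ge>J. \<forall>n\<in>{t j..<t (Suc j)}. mat_freq a b (Suc k) x n \<in> V" using jJ by blast
  qed
  show ?thesis using cd(1,2,3) all by blast
qed

lemma good_comeager:
  assumes b: "b \<ge> 2" and reg: "regular_matrix a" and ab: "(\<lambda>n. \<Sum>i. \<bar>a n i\<bar>) \<longlonglongrightarrow> 1"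
    and t: "strict_mono t" and V: "open V" "V \<inter> Delta b (Suc k) \<noteq> {}"
  shows "meager_in (top_of_set {0<..1})
     ({0<..1} - {x\<in>{0<..1::real}. \<forall>J. \<exists>j\<ge>J. \<forall>n\<in>{t j..<t (Suc j)}. mat_freq a b (Suc k) x n \<in> V})"
proof -
  obtain eta where eta: "eta \<in> V" "eta \<in> Delta b (Suc k)" using V(2) by blast
  define Oj where "Oj J = {x. \<exists>j\<ge>J. \<forall>n\<in>{t j..<t (Suc j)}. mat_freq a b (Suc k) x n \<in> V}" for J
  have nd: "nowhere_dense_in (top_of_set {0<..1}) ({0<..1} - Oj J)" for J
  proof (rule nd_interval)
    show "{0<..1} - Oj J \<subseteq> {0<..1}" by blast
    fix x0 r :: real assume x0: "x0 \<in> {0<..1}" and r: "r > 0"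
    obtain c d where cd: "c < d" "{c<..<d} \<subseteq> {0<..1}" "{c<..<d} \<subseteq> ball x0 r"
        "\<forall>x\<in>{c<..<d}. \<exists>j\<ge>J. \<forall>n\<in>{t j..<t (Suc j)}. mat_freq a b (Suc k) x n \<in> V"
      using density[OF b reg ab eta(2) V(1) eta(1) t x0 r, of J] by blast
    have "{c<..<d} \<inter> ({0<..1} - Oj J) = {}" using cd(4) by (auto simp: Oj_def)
    then show "\<exists>c d. c < d \<and> {c<..<d} \<subseteq> {0<..1} \<and> {c<..<d} \<subseteq> ball x0 r \<and> {c<..<d} \<inter> ({0<..1} - Oj J) = {}"
      using cd(1,2,3) by blast
  qed
  have "meager_in (top_of_set {0<..1}) (\<Union>J. {0<..1} - Oj J)" using nd by (rule meager_nd_seq)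
  moreover have "{0<..1} - {x\<in>{0<..1::real}. \<forall>J. \<exists>j\<ge>J. \<forall>n\<in>{t j..<t (Suc j)}. mat_freq a b (Suc k) x n \<in> V}
      \<subseteq> (\<Union>J. {0<..1} - Oj J)" by (auto simp: Oj_def)
  ultimately show ?thesis by (rule meager_subset)
qed

theorem corollary4p8:
  fixes I :: "nat set set" and \<A> :: "(nat \<Rightarrow> nat \<Rightarrow> real) set"
  assumes "meager_ideal I"
    and "countable \<A>"
    and "\<forall>a\<in>\<A>. regular_matrix a \<and> (\<lambda>n. \<Sum>i. \<bar>a n i\<bar>) \<longlonglongrightarrow> 1"
  shows "comeager_in (top_of_set {0<..1})
           {x \<in> {0<..1::real}. \<forall>b\<ge>2. \<forall>k\<ge>1. \<forall>a\<in>\<A>. Gamma b k x I a = Delta b k}"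
proof -
  have idl: "is_ideal I" using assms(1) by (simp add: meager_ideal_def)
  obtain t where t: "strict_mono t" and tal: "\<And>A. (\<forall>J. \<exists>j\<ge>J. {t j..<t (Suc j)} \<subseteq> A) \<Longrightarrow> A \<notin> I"
    using talagrand[OF assms(1)] by blast
  obtain BB :: "(nat list \<Rightarrow> real) set set" where BB: "countable BB" "topological_basis BB"
    using ex_countable_basis by blast
  define Idx where "Idx = {(b, k, a, V). b \<ge> 2 \<and> a \<in> \<A> \<and> V \<in> BB \<and> V \<inter> Delta b (Suc k) \<noteq> {}}"
  define Good where "Good b k a V = {x\<in>{0<..1::real}. \<forall>J. \<exists>j\<ge>J. \<forall>n\<in>{t j..<t (Suc j)}. mat_freq a b (Suc k) x n \<in> V}"
    for b k a V
  define Bad where "Bad = (\<lambda>(b, k, a, V). {0<..1::real} - Good b k a V)"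
  have cI: "countable Idx"
  proof (rule countable_subset)
    show "Idx \<subseteq> UNIV \<times> UNIV \<times> \<A> \<times> BB" by (auto simp: Idx_def)
    show "countable (UNIV \<times> UNIV \<times> \<A> \<times> BB :: (nat \<times> nat \<times> (nat \<Rightarrow> nat \<Rightarrow> real) \<times> (nat list \<Rightarrow> real) set) set)"
      using assms(2) BB(1) by (intro countable_SIGMA) auto
  qed
  have mB: "meager_in (top_of_set {0<..1}) (Bad i)" if "i \<in> Idx" for i
  proof -
    obtain b k a V where i: "i = (b, k, a, V)" by (cases i) auto
    have h: "b \<ge> 2" "a \<in> \<A>" "V \<in> BB" "V \<inter> Delta b (Suc k) \<noteq> {}" using that i by (auto simp: Idx_def)
    have ra: "regular_matrix a" "(\<lambda>n. \<Sum>i. \<bar>a n i\<bar>) \<longlonglongrightarrow> 1" using assms(3) h(2) by auto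
    have "open V" using BB(2) h(3) by (rule topological_basis_open)
    then show ?thesis unfolding i Bad_def Good_def using good_comeager[OF h(1) ra t _ h(4)] by simp
  qed
  have mU: "meager_in (top_of_set {0<..1}) (\<Union>i\<in>Idx. Bad i)" using cI mB by (rule meager_UN)
  define S where "S = {x \<in> {0<..1::real}. \<forall>b\<ge>2. \<forall>k\<ge>1. \<forall>a\<in>\<A>. Gamma b k x I a = Delta b k}"
  have sub: "{0<..1} - S \<subseteq> (\<Union>i\<in>Idx. Bad i)"
  proof
    fix x assume x: "x \<in> {0<..1} - S"
    then have x1: "x \<in> {0<..1}" by simp
    from x obtain b k a where bka: "b \<ge> 2" "k \<ge> 1" "a \<in> \<A>" "Gamma b k x I a \<noteq> Delta b k"
      unfolding S_def by blast
    obtain k' where k': "k = Suc k'" using bka(2) by (cases k) auto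
    have ra: "regular_matrix a" "(\<lambda>n. \<Sum>i. \<bar>a n i\<bar>) \<longlonglongrightarrow> 1" using assms(3) bka(3) by auto
    have "Gamma b k x I a \<subseteq> Delta b k" unfolding k' using Gamma_sub[OF bka(1) x1 idl ra] .
    then obtain eta where eta: "eta \<in> Delta b k" "eta \<notin> Gamma b k x I a" using bka(4) by blast
    then obtain U where U: "open U" "eta \<in> U" "{n. mat_freq a b k x n \<in> U} \<in> I"
      unfolding Gamma_def I_cluster_def by blast
    obtain V where V: "V \<in> BB" "eta \<in> V" "V \<subseteq> U" using topological_basisE[OF BB(2) U(1,2)] by blast
    have iI: "(b, k', a, V) \<in> Idx" using bka V eta(1) k' by (auto simp: Idx_def)
    have "x \<notin> Good b k' a V"
    proof
      assume "x \<in> Good b k' a V"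
      then have "\<forall>J. \<exists>j\<ge>J. {t j..<t (Suc j)} \<subseteq> {n. mat_freq a b k x n \<in> V}"
        unfolding Good_def k' by blast
      then have nI: "{n. mat_freq a b k x n \<in> V} \<notin> I" by (rule tal)
      have "{n. mat_freq a b k x n \<in> V} \<subseteq> {n. mat_freq a b k x n \<in> U}" using V(3) by blast
      then have "{n. mat_freq a b k x n \<in> V} \<in> I" using idl U(3) unfolding is_ideal_def by (elim conjE) blast
      then show False using nI by simp
    qed
    then have "x \<in> Bad (b, k', a, V)" using x1 by (simp add: Bad_def)
    then show "x \<in> (\<Union>i\<in>Idx. Bad i)" using iI by blast
  qed
  have "meager_in (top_of_set {0<..1}) ({0<..1} - S)" using mU sub by (rule meager_subset)
  moreover have "S \<subseteq> {0<..1}" by (auto simp: S_def)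
  ultimately show ?thesis unfolding comeager_in_def S_def by simp
qed


end
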